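(* Let $f\in\mathbb C[x,y]$ be a nonzero homogeneous polynomial of degree $d$. Then for every $\omega=(\omega_1,\omega_2)\in\mathbb R^2\setminus\{0\}$ the b-function $b_{\mathrm{Ann}(1/f),\omega}(s)$ divides $$\Big(\prod_{i=0}^d\big(s+i\omega_1+(d-i)\omega_2\big)\Big)_{\mathrm{red}}.$$
   Context: $D_2$ is the second Weyl algebra in $x,y,\partial_x,\partial_y$; ideals are left ideals. For $\omega\in\mathbb R^2$, the $(-\omega,\omega)$-weight of $x^{a}y^{b}\partial_x^{c}\partial_y^{e}$ is $-\omega_1a-\omega_2b+\omega_1c+\omega_2e$; $\mathrm{in}_{(-\omega,\omega)}(I)$ is the left ideal generated by the maximal-weight parts of the (normally ordered) elements of $I$. For a holonomic ideal $I$ and $\omega\neq0$, with $s=\omega_1x\partial_x+\omega_2y\partial_y$, the b-function $b_{I,\omega}(s)$ is the monic generator of $\mathrm{in}_{(-\omega,\omega)}(I)\cap\mathbb C[s]$. $\mathrm{Ann}(1/f)=\{P\in D_2:P\bullet f^{-1}=0\}$, with $x\bullet g=xg$, $\partial_x\bullet g=\partial g/\partial x$, etc. For a product $B(s)$ of linear factors, $B(s)_{\mathrm{red}}$ is the product of its distinct linear factors, each taken once. *)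

theory Defs
  imports "HOL-Analysis.Analysis" "HOL-Library.Poly_Mapping" "HOL-Computational_Algebra.Polynomial"
begin

text \<open>A polynomial in x,y: finitely supported map from exponent pairs (i,j) (for x^i y^j) to coefficients.\<close>
type_synonym bipoly = "(nat \<times> nat) \<Rightarrow>\<^sub>0 complex"

definition bipoly_eval :: "bipoly \<Rightarrow> complex \<Rightarrow> complex \<Rightarrow> complex" where
  "bipoly_eval f x y = (\<Sum>(i,j)\<in>Poly_Mapping.keys f. Poly_Mapping.lookup f (i,j) * x ^ i * y ^ j)"

definition homogeneous_of_degree :: "bipoly \<Rightarrow> nat \<Rightarrow> bool" where
  "homogeneous_of_degree f d \<longleftrightarrow> (\<forall>(i,j)\<in>Poly_Mapping.keys f. i + j = d)"

text \<open>(a,b,c,e) stands for the normally ordered monomial x^a y^b dx^c dy^e.\<close>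
type_synonym weyl = "(nat \<times> nat \<times> nat \<times> nat) \<Rightarrow>\<^sub>0 complex"

definition ffac :: "nat \<Rightarrow> nat \<Rightarrow> complex" where
  "ffac n k = (if k \<le> n then of_nat (fact n) / of_nat (fact (n - k)) else 0)"

text \<open>Product in D_2, using dx^c x^a' = sum_k (c choose k) a'!/(a'-k)! x^(a'-k) dx^(c-k).\<close>
definition wmul :: "weyl \<Rightarrow> weyl \<Rightarrow> weyl" where
  "wmul P Q = (\<Sum>(a,b,c,e)\<in>Poly_Mapping.keys P. \<Sum>(a',b',c',e')\<in>Poly_Mapping.keys Q. \<Sum>k\<in>{..c}. \<Sum>l\<in>{..e}.
      Poly_Mapping.single (a + a' - k, b + b' - l, c + c' - k, e + e' - l)
        (Poly_Mapping.lookup P (a,b,c,e) * Poly_Mapping.lookup Q (a',b',c',e') *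
         of_nat (c choose k) * ffac a' k * of_nat (e choose l) * ffac b' l))"

definition wconst :: "complex \<Rightarrow> weyl" where
  "wconst z = Poly_Mapping.single (0,0,0,0) z"

primrec wpow :: "weyl \<Rightarrow> nat \<Rightarrow> weyl" where
  "wpow P 0 = wconst 1"
| "wpow P (Suc n) = wmul P (wpow P n)"

inductive_set left_ideal_gen :: "weyl set \<Rightarrow> weyl set" for S where
  zero: "0 \<in> left_ideal_gen S"
| step: "P \<in> S \<Longrightarrow> R \<in> left_ideal_gen S \<Longrightarrow> wmul Q P + R \<in> left_ideal_gen S"

definition pdx :: "(complex \<Rightarrow> complex \<Rightarrow> complex) \<Rightarrow> complex \<Rightarrow> complex \<Rightarrow> complex" where
  "pdx F = (\<lambda>x y. deriv (\<lambda>t. F t y) x)"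

definition pdy :: "(complex \<Rightarrow> complex \<Rightarrow> complex) \<Rightarrow> complex \<Rightarrow> complex \<Rightarrow> complex" where
  "pdy F = (\<lambda>x y. deriv (\<lambda>t. F x t) y)"

definition wact :: "weyl \<Rightarrow> (complex \<Rightarrow> complex \<Rightarrow> complex) \<Rightarrow> complex \<Rightarrow> complex \<Rightarrow> complex" where
  "wact P F = (\<lambda>x y. \<Sum>(a,b,c,e)\<in>Poly_Mapping.keys P.
      Poly_Mapping.lookup P (a,b,c,e) * x ^ a * y ^ b * (((pdx ^^ c) ((pdy ^^ e) F)) x y))"

text \<open>Ann(1/f): operators killing the rational function 1/f (checked on the dense open set where f is nonzero).\<close>
definition Ann_inv :: "bipoly \<Rightarrow> weyl set" where
  "Ann_inv f = {P. \<forall>x y. bipoly_eval f x y \<noteq> 0 \<longrightarrow>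
                     wact P (\<lambda>u v. 1 / bipoly_eval f u v) x y = 0}"

definition wweight :: "real \<times> real \<Rightarrow> nat \<times> nat \<times> nat \<times> nat \<Rightarrow> real" where
  "wweight \<omega> m = (case m of (a,b,c,e) \<Rightarrow>
      - fst \<omega> * real a - snd \<omega> * real b + fst \<omega> * real c + snd \<omega> * real e)"

definition initial_form :: "real \<times> real \<Rightarrow> weyl \<Rightarrow> weyl" where
  "initial_form \<omega> P =
     (if P = 0 then 0 else
      (let M = Max (wweight \<omega> ` Poly_Mapping.keys P) in
       \<Sum>m\<in>{m\<in>Poly_Mapping.keys P. wweight \<omega> m = M}. Poly_Mapping.single m (Poly_Mapping.lookup P m)))"

definition initial_ideal :: "real \<times> real \<Rightarrow> weyl set \<Rightarrow> weyl set" where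
  "initial_ideal \<omega> I = left_ideal_gen (initial_form \<omega> ` I)"

definition euler_s :: "real \<times> real \<Rightarrow> weyl" where
  "euler_s \<omega> = Poly_Mapping.single (1,0,1,0) (complex_of_real (fst \<omega>))
             + Poly_Mapping.single (0,1,0,1) (complex_of_real (snd \<omega>))"

definition poly_in_s :: "real \<times> real \<Rightarrow> complex poly \<Rightarrow> weyl" where
  "poly_in_s \<omega> p = (\<Sum>k\<le>Polynomial.degree p. wmul (wconst (coeff p k)) (wpow (euler_s \<omega>) k))"

definition b_function :: "weyl set \<Rightarrow> real \<times> real \<Rightarrow> complex poly" where
  "b_function I \<omega> = (THE b. lead_coeff b = 1 \<and>
       {p. poly_in_s \<omega> p \<in> initial_ideal \<omega> I} = {p. b dvd p})"

end

theory Submission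
  imports Defs
begin


definition ff :: "nat \<Rightarrow> nat \<Rightarrow> nat" where "ff n k = fact k * (n choose k)"

lemma ffac_ff: "ffac n k = of_nat (ff n k)"
proof (cases "k \<le> n")
  case True
  have "fact k * fact (n - k) * (n choose k) = fact n" using binomial_fact_lemma[OF True] .
  hence "(of_nat (fact n) :: complex) = of_nat (fact k * (n choose k)) * of_nat (fact (n - k))"
    by (metis mult.commute mult.left_commute of_nat_mult)
  thus ?thesis using True unfolding ffac_def ff_def by (simp add: field_simps)
next
  case False thus ?thesis by (simp add: ffac_def ff_def)
qed

lemma ff_zero_iff: "ff n k = 0 \<longleftrightarrow> n < k"
  by (simp add: ff_def)

lemma ff_mult_fact: "r \<le> n \<Longrightarrow> ff n r * fact (n - r) = fact n"
  unfolding ff_def using binomial_fact_lemma[of r n] by (simp add: ac_simps)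

lemma ff_split: "ff (c' + n) (c' + r) = ff (c' + n) c' * ff n r"
proof (cases "r \<le> n")
  case False thus ?thesis by (simp add: ff_def binomial_eq_0)
next
  case True
  have 1: "ff (c' + n) (c' + r) * fact (n - r) = fact (c' + n)"
    using ff_mult_fact[of "c' + r" "c' + n"] True by simp
  have 2: "ff (c' + n) c' * ff n r * fact (n - r) = fact (c' + n)"
  proof -
    have a: "ff n r * fact (n - r) = fact n" using ff_mult_fact[of r n] True by simp
    have b: "ff (c' + n) c' * fact n = fact (c' + n)" using ff_mult_fact[of c' "c' + n"] by simp
    show ?thesis using a b by (metis mult.assoc)
  qed
  from 1 2 show ?thesis by (metis fact_nonzero mult_right_cancel)
qed

lemma ff_vandermonde: "(\<Sum>k\<le>c. (c choose k) * ff a k * ff n (c - k)) = ff (a + n) c"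
proof -
  have "(\<Sum>k\<le>c. (c choose k) * ff a k * ff n (c - k)) = (\<Sum>k\<le>c. fact c * ((a choose k) * (n choose (c - k))))"
  proof (rule sum.cong[OF refl])
    fix k assume "k \<in> {..c}" hence k: "k \<le> c" by simp
    have "(c choose k) * fact k * fact (c - k) = fact c" using binomial_fact_lemma[OF k] by (simp add: ac_simps)
    thus "(c choose k) * ff a k * ff n (c - k) = fact c * ((a choose k) * (n choose (c - k)))"
      unfolding ff_def by (metis (no_types, lifting) mult.assoc mult.left_commute)
  qed
  also have "\<dots> = fact c * ((a + n) choose c)" by (simp add: sum_distrib_left[symmetric] vandermonde)
  finally show ?thesis by (simp add: ff_def)
qed

lemma ff_conv: "(\<Sum>k\<le>c. (c choose k) * ff a' k * ff i (c + c' - k)) = ff i c' * ff (i - c' + a') c"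
proof (cases "i < c'")
  case True
  have "ff i (c + c' - k) = 0" if "k \<le> c" for k using that True by (simp add: ff_zero_iff)
  hence "(\<Sum>k\<le>c. (c choose k) * ff a' k * ff i (c + c' - k)) = 0" by simp
  moreover have "ff i c' = 0" using True by (simp add: ff_zero_iff)
  ultimately show ?thesis by simp
next
  case False
  then obtain n where n: "i = c' + n" by (metis le_add_diff_inverse not_less)
  have "(\<Sum>k\<le>c. (c choose k) * ff a' k * ff i (c + c' - k)) = (\<Sum>k\<le>c. ff i c' * ((c choose k) * ff a' k * ff n (c - k)))"
  proof (rule sum.cong[OF refl])
    fix k assume "k \<in> {..c}" hence "c + c' - k = c' + (c - k)" by auto
    thus "(c choose k) * ff a' k * ff i (c + c' - k) = ff i c' * ((c choose k) * ff a' k * ff n (c - k))"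
      using ff_split[of c' n "c - k"] n by simp
  qed
  also have "\<dots> = ff i c' * ff (a' + n) c" by (simp add: sum_distrib_left[symmetric] ff_vandermonde)
  finally show ?thesis using n by (simp add: add.commute)
qed

lemma ff_tgt:
  assumes "k \<le> c" "ff a' k \<noteq> 0" "ff i (c + c' - k) \<noteq> 0"
  shows "i - (c + c' - k) + (a + a' - k) = i - c' + a' - c + a"
  using assms by (simp add: ff_zero_iff)



type_synonym bmon = "(nat \<times> nat) \<Rightarrow>\<^sub>0 complex"

fun tgt :: "nat \<times> nat \<times> nat \<times> nat \<Rightarrow> nat \<times> nat \<Rightarrow> nat \<times> nat" where
  "tgt (a,b,c,e) (i,j) = (i - c + a, j - e + b)"

fun coef :: "nat \<times> nat \<times> nat \<times> nat \<Rightarrow> nat \<times> nat \<Rightarrow> complex" where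
  "coef (a,b,c,e) (i,j) = ffac i c * ffac j e"

definition act :: "weyl \<Rightarrow> bmon \<Rightarrow> bmon" where
  "act P g = (\<Sum>m\<in>Poly_Mapping.keys P. \<Sum>n\<in>Poly_Mapping.keys g.
      Poly_Mapping.single (tgt m n) (Poly_Mapping.lookup P m * Poly_Mapping.lookup g n * coef m n))"

lemma sum_keys_superset:
  fixes F :: "'a \<Rightarrow> 'b::zero \<Rightarrow> 'c::comm_monoid_add"
  assumes "Poly_Mapping.keys P \<subseteq> S" "finite S" "\<And>m. F m 0 = 0"
  shows "(\<Sum>m\<in>Poly_Mapping.keys P. F m (Poly_Mapping.lookup P m)) = (\<Sum>m\<in>S. F m (Poly_Mapping.lookup P m))"
  by (rule sum.mono_neutral_left) (use assms in \<open>auto simp: in_keys_iff\<close>)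

lemma single_sum: "Poly_Mapping.single k (\<Sum>x\<in>A. f x) = (\<Sum>x\<in>A. Poly_Mapping.single k (f x))"
  by (induction A rule: infinite_finite_induct) (auto simp: single_add)

definition actF :: "bmon \<Rightarrow> nat \<times> nat \<times> nat \<times> nat \<Rightarrow> complex \<Rightarrow> bmon" where
  "actF g m v = (\<Sum>n\<in>Poly_Mapping.keys g. Poly_Mapping.single (tgt m n) (v * Poly_Mapping.lookup g n * coef m n))"

definition actG :: "weyl \<Rightarrow> nat \<times> nat \<times> nat \<times> nat \<Rightarrow> nat \<times> nat \<Rightarrow> complex \<Rightarrow> bmon" where
  "actG P m n v = Poly_Mapping.single (tgt m n) (Poly_Mapping.lookup P m * v * coef m n)"

lemma act_actF: "act P g = (\<Sum>m\<in>Poly_Mapping.keys P. actF g m (Poly_Mapping.lookup P m))"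
  by (simp add: act_def actF_def)

lemma act_actG: "act P g = (\<Sum>m\<in>Poly_Mapping.keys P. \<Sum>n\<in>Poly_Mapping.keys g. actG P m n (Poly_Mapping.lookup g n))"
  by (simp add: act_def actG_def)

lemma act_add_left: "act (P + Q) g = act P g + act Q g"
proof -
  define S where "S = Poly_Mapping.keys P \<union> Poly_Mapping.keys Q"
  have F0: "\<And>m. actF g m 0 = 0" by (simp add: actF_def)
  have fin: "finite S" by (simp add: S_def)
  have e: "(\<Sum>m\<in>Poly_Mapping.keys x. actF g m (Poly_Mapping.lookup x m)) = (\<Sum>m\<in>S. actF g m (Poly_Mapping.lookup x m))"
    if "Poly_Mapping.keys x \<subseteq> S" for x
    using sum_keys_superset[OF that fin, of "actF g"] F0 by simp
  have kPQ: "Poly_Mapping.keys (P + Q) \<subseteq> S" using keys_add[of P Q] by (auto simp: S_def)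
  have "act (P + Q) g = (\<Sum>m\<in>S. actF g m (Poly_Mapping.lookup (P+Q) m))"
    unfolding act_actF by (rule e[OF kPQ])
  also have "\<dots> = (\<Sum>m\<in>S. actF g m (Poly_Mapping.lookup P m)) + (\<Sum>m\<in>S. actF g m (Poly_Mapping.lookup Q m))"
    by (simp add: lookup_add actF_def distrib_right single_add sum.distrib)
  also have "\<dots> = act P g + act Q g"
    unfolding act_actF using e[of P] e[of Q] by (simp add: S_def)
  finally show ?thesis .
qed

lemma act_add_right: "act P (g + h) = act P g + act P h"
proof -
  define S where "S = Poly_Mapping.keys g \<union> Poly_Mapping.keys h"
  have F0: "actG P m n 0 = 0" for m n by (simp add: actG_def)
  have fin: "finite S" by (simp add: S_def)
  have kgh: "Poly_Mapping.keys (g + h) \<subseteq> S" using keys_add[of g h] by (auto simp: S_def)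
  have e: "(\<Sum>n\<in>Poly_Mapping.keys x. actG P m n (Poly_Mapping.lookup x n)) = (\<Sum>n\<in>S. actG P m n (Poly_Mapping.lookup x n))"
    if "Poly_Mapping.keys x \<subseteq> S" for x m
    using sum_keys_superset[OF that fin, of "actG P m"] F0 by simp
  have "act P (g + h) = (\<Sum>m\<in>Poly_Mapping.keys P. \<Sum>n\<in>S. actG P m n (Poly_Mapping.lookup (g+h) n))"
    unfolding act_actG using e[OF kgh] by simp
  also have "\<dots> = (\<Sum>m\<in>Poly_Mapping.keys P. \<Sum>n\<in>S. actG P m n (Poly_Mapping.lookup g n))
      + (\<Sum>m\<in>Poly_Mapping.keys P. \<Sum>n\<in>S. actG P m n (Poly_Mapping.lookup h n))"
    by (simp add: lookup_add actG_def distrib_right distrib_left single_add sum.distrib)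
  also have "\<dots> = act P g + act P h"
    unfolding act_actG using e[of g] e[of h] by (simp add: S_def)
  finally show ?thesis .
qed

lemma act_zero_left [simp]: "act 0 g = 0" by (simp add: act_def)
lemma act_zero_right [simp]: "act P 0 = 0" by (simp add: act_def)

lemma act_sum_left: "act (\<Sum>x\<in>A. P x) g = (\<Sum>x\<in>A. act (P x) g)"
  by (induction A rule: infinite_finite_induct) (auto simp: act_add_left)

lemma act_sum_right: "act P (\<Sum>x\<in>A. g x) = (\<Sum>x\<in>A. act P (g x))"
  by (induction A rule: infinite_finite_induct) (auto simp: act_add_right)

lemma act_single_single:
  "act (Poly_Mapping.single m v) (Poly_Mapping.single n w) = Poly_Mapping.single (tgt m n) (v * w * coef m n)"
  by (simp add: act_def)

lemma pm_expand: "P = (\<Sum>m\<in>Poly_Mapping.keys P. Poly_Mapping.single m (Poly_Mapping.lookup P m))"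
proof (rule poly_mapping_eqI)
  fix k
  show "Poly_Mapping.lookup P k = Poly_Mapping.lookup (\<Sum>m\<in>Poly_Mapping.keys P. Poly_Mapping.single m (Poly_Mapping.lookup P m)) k"
    by (simp add: lookup_sum lookup_single when_def in_keys_iff)
qed

lemma act_expand: "act P g = (\<Sum>m\<in>Poly_Mapping.keys P. \<Sum>n\<in>Poly_Mapping.keys g.
   act (Poly_Mapping.single m (Poly_Mapping.lookup P m)) (Poly_Mapping.single n (Poly_Mapping.lookup g n)))"
  by (simp only: act_single_single) (simp add: act_def)

lemma act_expand_left: "act P h = (\<Sum>m\<in>Poly_Mapping.keys P. act (Poly_Mapping.single m (Poly_Mapping.lookup P m)) h)"
proof -
  have "act P h = act (\<Sum>m\<in>Poly_Mapping.keys P. Poly_Mapping.single m (Poly_Mapping.lookup P m)) h"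
    by (simp only: pm_expand[of P, symmetric])
  thus ?thesis by (simp add: act_sum_left)
qed

lemma act_expand_right: "act P g = (\<Sum>n\<in>Poly_Mapping.keys g. act P (Poly_Mapping.single n (Poly_Mapping.lookup g n)))"
proof -
  have "act P g = act P (\<Sum>n\<in>Poly_Mapping.keys g. Poly_Mapping.single n (Poly_Mapping.lookup g n))"
    by (simp only: pm_expand[of g, symmetric])
  thus ?thesis by (simp add: act_sum_right)
qed

lemma wmul_single_single:
  "wmul (Poly_Mapping.single (a,b,c,e) v) (Poly_Mapping.single (a',b',c',e') w) =
    (\<Sum>k\<le>c. \<Sum>l\<le>e. Poly_Mapping.single (a + a' - k, b + b' - l, c + c' - k, e + e' - l)
        (v * w * of_nat (c choose k) * ffac a' k * of_nat (e choose l) * ffac b' l))"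
  by (cases "v = 0"; cases "w = 0") (simp_all add: wmul_def)

lemma wmul_expand: "wmul P Q = (\<Sum>m1\<in>Poly_Mapping.keys P. \<Sum>m2\<in>Poly_Mapping.keys Q.
    wmul (Poly_Mapping.single m1 (Poly_Mapping.lookup P m1)) (Poly_Mapping.single m2 (Poly_Mapping.lookup Q m2)))"
  unfolding wmul_def by (simp add: in_keys_iff case_prod_beta)

lemma act_wmul_core:
  "act (wmul (Poly_Mapping.single m1 v) (Poly_Mapping.single m2 w)) (Poly_Mapping.single n u)
   = act (Poly_Mapping.single m1 v) (act (Poly_Mapping.single m2 w) (Poly_Mapping.single n u))"
proof -
  obtain a b c e where m1: "m1 = (a,b,c,e)" by (cases m1) auto
  obtain a' b' c' e' where m2: "m2 = (a',b',c',e')" by (cases m2) auto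
  obtain i j where n: "n = (i,j)" by (cases n) auto
  define Tx where "Tx = i - c' + a' - c + a"
  define Ty where "Ty = j - e' + b' - e + b"
  define tx where "tx = (\<lambda>k. of_nat ((c choose k) * ff a' k * ff i (c + c' - k)) :: complex)"
  define ty where "ty = (\<lambda>l. of_nat ((e choose l) * ff b' l * ff j (e + e' - l)) :: complex)"
  have sx: "(\<Sum>k\<le>c. tx k) = ffac i c' * ffac (i - c' + a') c"
    unfolding tx_def ffac_ff of_nat_sum[symmetric] ff_conv by simp
  have sy: "(\<Sum>l\<le>e. ty l) = ffac j e' * ffac (j - e' + b') e"
    unfolding ty_def ffac_ff of_nat_sum[symmetric] ff_conv by simp
  have trm: "act (Poly_Mapping.single (a + a' - k, b + b' - l, c + c' - k, e + e' - l)
        (v * w * of_nat (c choose k) * ffac a' k * of_nat (e choose l) * ffac b' l)) (Poly_Mapping.single n u)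
     = Poly_Mapping.single (Tx, Ty) (v * w * u * (tx k * ty l))" if k: "k \<le> c" and l: "l \<le> e" for k l
  proof -
    have lhs: "act (Poly_Mapping.single (a + a' - k, b + b' - l, c + c' - k, e + e' - l)
        (v * w * of_nat (c choose k) * ffac a' k * of_nat (e choose l) * ffac b' l)) (Poly_Mapping.single n u)
      = Poly_Mapping.single (i - (c + c' - k) + (a + a' - k), j - (e + e' - l) + (b + b' - l)) (v * w * u * (tx k * ty l))"
      unfolding act_single_single n by (simp add: tx_def ty_def ffac_ff ac_simps)
    show ?thesis
    proof (cases "tx k * ty l = 0")
      case True
      hence "v * w * u * (tx k * ty l) = 0" by simp
      thus ?thesis using lhs by (metis single_zero)
    next
      case False
      hence "ff a' k \<noteq> 0" "ff i (c + c' - k) \<noteq> 0" "ff b' l \<noteq> 0" "ff j (e + e' - l) \<noteq> 0"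
        by (auto simp: tx_def ty_def)
      hence "i - (c + c' - k) + (a + a' - k) = Tx" "j - (e + e' - l) + (b + b' - l) = Ty"
        using ff_tgt[OF k] ff_tgt[OF l] by (auto simp: Tx_def Ty_def)
      thus ?thesis using lhs by simp
    qed
  qed
  have "act (wmul (Poly_Mapping.single m1 v) (Poly_Mapping.single m2 w)) (Poly_Mapping.single n u)
      = (\<Sum>k\<le>c. \<Sum>l\<le>e. Poly_Mapping.single (Tx, Ty) (v * w * u * (tx k * ty l)))"
    unfolding m1 m2 wmul_single_single act_sum_left using trm by simp
  also have "\<dots> = Poly_Mapping.single (Tx, Ty) (v * w * u * ((\<Sum>k\<le>c. tx k) * (\<Sum>l\<le>e. ty l)))"
    by (simp add: single_sum[symmetric] sum_distrib_left sum_distrib_right, subst sum.swap, rule refl)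
  also have "\<dots> = act (Poly_Mapping.single m1 v) (act (Poly_Mapping.single m2 w) (Poly_Mapping.single n u))"
    unfolding sx sy m1 m2 n act_single_single by (simp add: Tx_def Ty_def ac_simps)
  finally show ?thesis .
qed

lemma act_wmul: "act (wmul P Q) g = act P (act Q g)"
proof -
  let ?s = "\<lambda>X m. Poly_Mapping.single m (Poly_Mapping.lookup X m)"
  have r1: "act Q g = (\<Sum>m2\<in>Poly_Mapping.keys Q. \<Sum>n\<in>Poly_Mapping.keys g. act (?s Q m2) (?s g n))"
    apply (subst act_expand_left)
    apply (rule sum.cong[OF refl])
    apply (rule act_expand_right)
    done
  have "act (wmul P Q) g = (\<Sum>m1\<in>Poly_Mapping.keys P. \<Sum>m2\<in>Poly_Mapping.keys Q. act (wmul (?s P m1) (?s Q m2)) g)"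
    apply (subst wmul_expand)
    apply (simp only: act_sum_left)
    done
  also have "\<dots> = (\<Sum>m1\<in>Poly_Mapping.keys P. \<Sum>m2\<in>Poly_Mapping.keys Q. \<Sum>n\<in>Poly_Mapping.keys g.
       act (?s P m1) (act (?s Q m2) (?s g n)))"
    apply (rule sum.cong[OF refl])+
    apply (subst act_expand_right)
    apply (simp only: act_wmul_core)
    done
  also have "\<dots> = act P (act Q g)"
    apply (subst act_expand_left[of P "act Q g"])
    apply (subst r1)
    apply (simp only: act_sum_right)
    done
  finally show ?thesis .
qed



lemma act_single_right_lookup:
  "Poly_Mapping.lookup (act P (Poly_Mapping.single n c)) k = c * Poly_Mapping.lookup (act P (Poly_Mapping.single n 1)) k"
proof (cases "c = 0")
  case True thus ?thesis by simp
next
  case False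
  have "Poly_Mapping.lookup (act P (Poly_Mapping.single n c)) k
     = (\<Sum>m\<in>Poly_Mapping.keys P. (Poly_Mapping.lookup P m * c * coef m n when tgt m n = k))"
    using False by (simp add: act_def lookup_sum lookup_single)
  also have "\<dots> = c * (\<Sum>m\<in>Poly_Mapping.keys P. (Poly_Mapping.lookup P m * coef m n when tgt m n = k))"
    unfolding sum_distrib_left by (rule sum.cong) (auto simp: when_def)
  also have "\<dots> = c * Poly_Mapping.lookup (act P (Poly_Mapping.single n 1)) k"
    by (simp add: act_def lookup_sum lookup_single)
  finally show ?thesis .
qed

lemma act_single_right_scale:
  "act P (Poly_Mapping.single n c) = act (Poly_Mapping.single (0,0,0,0) c) (act P (Poly_Mapping.single n 1))"
proof (rule poly_mapping_eqI)
  fix k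
  have "Poly_Mapping.lookup (act (Poly_Mapping.single (0,0,0,0) c) h) k = c * Poly_Mapping.lookup h k" for h :: bmon
  proof -
    have "act (Poly_Mapping.single (0,0,0,0) c) h = (\<Sum>n\<in>Poly_Mapping.keys h. Poly_Mapping.single n (c * Poly_Mapping.lookup h n))"
    proof (subst act_expand_right, rule sum.cong[OF refl])
      fix n assume "n \<in> Poly_Mapping.keys h"
      obtain i j where "n = (i,j)" by (cases n) auto
      thus "act (Poly_Mapping.single (0,0,0,0) c) (Poly_Mapping.single n (Poly_Mapping.lookup h n)) = Poly_Mapping.single n (c * Poly_Mapping.lookup h n)"
        by (simp add: act_single_single ffac_def)
    qed
    hence "Poly_Mapping.lookup (act (Poly_Mapping.single (0,0,0,0) c) h) k = (\<Sum>n\<in>Poly_Mapping.keys h. if n = k then c * Poly_Mapping.lookup h n else 0)"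
      by (simp add: lookup_sum lookup_single when_def)
    also have "\<dots> = c * Poly_Mapping.lookup h k"
      by (subst sum.delta) (auto simp: in_keys_iff)
    finally show ?thesis .
  qed
  from this[of "act P (Poly_Mapping.single n 1)"] act_single_right_lookup[of P n c k]
  show "Poly_Mapping.lookup (act P (Poly_Mapping.single n c)) k = Poly_Mapping.lookup (act (Poly_Mapping.single (0,0,0,0) c) (act P (Poly_Mapping.single n 1))) k"
    by simp
qed

abbreviation sc :: "complex \<Rightarrow> weyl" where "sc c \<equiv> Poly_Mapping.single (0,0,0,0) c"

lemma act_sc_lookup: "Poly_Mapping.lookup (act (sc c) h) k = c * Poly_Mapping.lookup h k"
proof -
  have "act (sc c) h = (\<Sum>n\<in>Poly_Mapping.keys h. Poly_Mapping.single n (c * Poly_Mapping.lookup h n))"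
  proof (subst act_expand_right, rule sum.cong[OF refl])
    fix n assume "n \<in> Poly_Mapping.keys h"
    obtain i j where "n = (i,j)" by (cases n) auto
    thus "act (sc c) (Poly_Mapping.single n (Poly_Mapping.lookup h n)) = Poly_Mapping.single n (c * Poly_Mapping.lookup h n)"
      by (simp add: act_single_single ffac_def)
  qed
  hence "Poly_Mapping.lookup (act (sc c) h) k = (\<Sum>n\<in>Poly_Mapping.keys h. if n = k then c * Poly_Mapping.lookup h n else 0)"
    by (simp add: lookup_sum lookup_single when_def)
  also have "\<dots> = c * Poly_Mapping.lookup h k"
    by (subst sum.delta) (auto simp: in_keys_iff)
  finally show ?thesis .
qed

lemma act_sc_one: "act (sc 1) h = h"
  by (rule poly_mapping_eqI) (simp add: act_sc_lookup)

lemma faithful0: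
  assumes "\<And>i j. act P (Poly_Mapping.single (i,j) 1) = 0"
  shows "P = 0"
proof (rule ccontr)
  assume "P \<noteq> 0"
  then obtain m where "m \<in> Poly_Mapping.keys P" by (metis keys_eq_empty ex_in_conv)
  then obtain m0 where m0: "m0 \<in> Poly_Mapping.keys P"
     and minm: "\<And>m. m \<in> Poly_Mapping.keys P \<Longrightarrow> (case m0 of (a,b,c,e) \<Rightarrow> c + e) \<le> (case m of (a,b,c,e) \<Rightarrow> c + e)"
    using ex_has_least_nat[of "\<lambda>m. m \<in> Poly_Mapping.keys P" m "\<lambda>m. case m of (a,b,c,e) \<Rightarrow> c + e"] by blast
  obtain a0 b0 c0 e0 where m0e: "m0 = (a0,b0,c0,e0)" by (cases m0) auto
  define n where "n = (c0, e0)"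
  have "Poly_Mapping.lookup (act P (Poly_Mapping.single n 1)) (a0,b0)
     = (\<Sum>m\<in>Poly_Mapping.keys P. if tgt m n = (a0,b0) then Poly_Mapping.lookup P m * coef m n else 0)"
    by (simp add: act_def lookup_sum lookup_single when_def)
  also have "\<dots> = (if tgt m0 n = (a0,b0) then Poly_Mapping.lookup P m0 * coef m0 n else 0)"
  proof (rule sum.remove[OF finite_keys m0, THEN trans], rule trans[OF _ add_0_right], rule arg_cong[where f="\<lambda>x. _ + x"])
    show "(\<Sum>m\<in>Poly_Mapping.keys P - {m0}. if tgt m n = (a0,b0) then Poly_Mapping.lookup P m * coef m n else 0) = 0"
    proof (rule sum.neutral, rule ballI)
      fix m assume mm: "m \<in> Poly_Mapping.keys P - {m0}"
      obtain a b c e where me: "m = (a,b,c,e)" by (cases m) auto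
      show "(if tgt m n = (a0,b0) then Poly_Mapping.lookup P m * coef m n else 0) = 0"
      proof (cases "coef m n = 0")
        case False
        hence "c \<le> c0" "e \<le> e0" by (auto simp: me n_def ffac_def split: if_splits)
        moreover have "c0 + e0 \<le> c + e" using minm[of m] mm by (simp add: m0e me)
        ultimately have "c = c0" "e = e0" by auto
        thus ?thesis using mm by (auto simp: me m0e n_def)
      qed simp
    qed
  qed
  also have "\<dots> = Poly_Mapping.lookup P m0 * (fact c0 * fact e0)"
    by (simp add: m0e n_def ffac_def)
  finally have "Poly_Mapping.lookup (act P (Poly_Mapping.single n 1)) (a0,b0) \<noteq> 0"
    using m0 by (simp add: in_keys_iff)
  thus False using assms[of c0 e0] by (simp add: n_def)
qed

lemma act_diff_left: "act (P - Q) g = act P g - act Q g"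
  using act_add_left[of "P - Q" Q g] by simp

lemma faithful:
  assumes "\<And>i j. act P (Poly_Mapping.single (i,j) 1) = act Q (Poly_Mapping.single (i,j) 1)"
  shows "P = Q"
  using faithful0[of "P - Q"] assms by (simp add: act_diff_left)

lemma faithful_gen:
  assumes "\<And>g. act P g = act Q g"
  shows "P = Q"
  using faithful assms by blast

lemma wmul_assoc: "wmul (wmul P Q) R = wmul P (wmul Q R)"
  by (rule faithful_gen) (simp add: act_wmul)

lemma wmul_add_right: "wmul P (Q + R) = wmul P Q + wmul P R"
  by (rule faithful_gen) (simp add: act_wmul act_add_left act_add_right)

lemma wmul_add_left: "wmul (P + Q) R = wmul P R + wmul Q R"
  by (rule faithful_gen) (simp add: act_wmul act_add_left act_add_right)

lemma wmul_zero_right [simp]: "wmul P 0 = 0"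
  by (simp add: wmul_def)

lemma wmul_zero_left [simp]: "wmul 0 P = 0"
  by (simp add: wmul_def)

lemma wconst_sc: "wconst c = sc c" by (simp add: wconst_def)

lemma wmul_one_left: "wmul (sc 1) P = P"
  by (rule faithful_gen) (simp add: act_wmul act_sc_one)

lemma lig_add: "X \<in> left_ideal_gen S \<Longrightarrow> Y \<in> left_ideal_gen S \<Longrightarrow> X + Y \<in> left_ideal_gen S"
proof (induction X rule: left_ideal_gen.induct)
  case zero thus ?case by simp
next
  case (step P R Q)
  have "wmul Q P + R + Y = wmul Q P + (R + Y)" by (simp add: add.assoc)
  thus ?case using step left_ideal_gen.step[of P S "R + Y" Q] by (simp add: add.assoc)
qed

lemma lig_mul: "X \<in> left_ideal_gen S \<Longrightarrow> wmul W X \<in> left_ideal_gen S"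
proof (induction X rule: left_ideal_gen.induct)
  case zero thus ?case by (simp add: left_ideal_gen.zero)
next
  case (step P R Q)
  have "wmul W (wmul Q P + R) = wmul (wmul W Q) P + wmul W R" by (simp add: wmul_add_right wmul_assoc)
  thus ?case using step by (simp add: left_ideal_gen.step)
qed

lemma lig_gen: "P \<in> S \<Longrightarrow> P \<in> left_ideal_gen S"
  using left_ideal_gen.step[of P S 0 "sc 1"] left_ideal_gen.zero by (simp add: wmul_one_left)

lemma lig_uminus: "X \<in> left_ideal_gen S \<Longrightarrow> - X \<in> left_ideal_gen S"
proof -
  assume "X \<in> left_ideal_gen S"
  hence "wmul (sc (-1)) X \<in> left_ideal_gen S" by (rule lig_mul)
  moreover have "wmul (sc (-1)) X = - X"
  proof (rule faithful_gen)
    fix g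
    have "act (- X) g = - act X g" using act_add_left[of X "- X" g] by (simp add: eq_neg_iff_add_eq_0 add.commute)
    thus "act (wmul (sc (-1)) X) g = act (- X) g"
      by (simp add: act_wmul poly_mapping_eq_iff fun_eq_iff act_sc_lookup)
  qed
  ultimately show ?thesis by simp
qed

lemma lig_diff: "X \<in> left_ideal_gen S \<Longrightarrow> Y \<in> left_ideal_gen S \<Longrightarrow> X - Y \<in> left_ideal_gen S"
  using lig_add[of X S "- Y"] lig_uminus[of Y S] by simp



definition diag :: "weyl \<Rightarrow> (nat \<Rightarrow> nat \<Rightarrow> complex) \<Rightarrow> bool" where
  "diag P h \<longleftrightarrow> (\<forall>i j. act P (Poly_Mapping.single (i,j) 1) = Poly_Mapping.single (i,j) (h i j))"

lemma act_sc_single: "act (sc c) (Poly_Mapping.single n v) = Poly_Mapping.single n (c * v)"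
  by (rule poly_mapping_eqI) (simp add: act_sc_lookup lookup_single when_def)

lemma diag_act: "diag P h \<Longrightarrow> act P (Poly_Mapping.single (i,j) c) = Poly_Mapping.single (i,j) (c * h i j)"
  unfolding diag_def by (subst act_single_right_scale) (simp add: act_sc_single)

lemma diag_wmul: "diag P h \<Longrightarrow> diag Q k \<Longrightarrow> diag (wmul P Q) (\<lambda>i j. h i j * k i j)"
  unfolding diag_def[of "wmul P Q"] by (simp add: act_wmul diag_def[of Q] diag_act mult.commute)

lemma diag_add: "diag P h \<Longrightarrow> diag Q k \<Longrightarrow> diag (P + Q) (\<lambda>i j. h i j + k i j)"
  unfolding diag_def by (simp add: act_add_left single_add)

lemma diag_zero: "diag 0 (\<lambda>i j. 0)"
  unfolding diag_def by simp

lemma diag_sum: "(\<And>x. x \<in> A \<Longrightarrow> diag (P x) (h x)) \<Longrightarrow> diag (\<Sum>x\<in>A. P x) (\<lambda>i j. \<Sum>x\<in>A. h x i j)"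
proof (induction A rule: infinite_finite_induct)
  case (infinite A) thus ?case using diag_zero by simp
next
  case empty thus ?case using diag_zero by simp
next
  case (insert x F)
  thus ?case using diag_add[of "P x" "h x" "\<Sum>x\<in>F. P x" "\<lambda>i j. \<Sum>x\<in>F. h x i j"] by simp
qed

lemma diag_sc: "diag (sc c) (\<lambda>i j. c)"
  unfolding diag_def by (simp add: act_sc_single)

lemma diag_thx: "diag (Poly_Mapping.single (1,0,1,0) c) (\<lambda>i j. c * of_nat i)"
  unfolding diag_def
proof (intro allI)
  fix i j
  show "act (Poly_Mapping.single (1,0,1,0) c) (Poly_Mapping.single (i,j) 1) = Poly_Mapping.single (i,j) (c * of_nat i)"
    by (cases i) (simp_all add: act_single_single ffac_ff ff_def)
qed

lemma diag_thy: "diag (Poly_Mapping.single (0,1,0,1) c) (\<lambda>i j. c * of_nat j)"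
  unfolding diag_def
proof (intro allI)
  fix i j
  show "act (Poly_Mapping.single (0,1,0,1) c) (Poly_Mapping.single (i,j) 1) = Poly_Mapping.single (i,j) (c * of_nat j)"
    by (cases j) (simp_all add: act_single_single ffac_ff ff_def)
qed


lemma diag_unique: "diag P h \<Longrightarrow> diag Q h \<Longrightarrow> P = Q"
  by (rule faithful) (simp add: diag_def)

lemma diag_cong: "diag P h \<Longrightarrow> (\<And>i j. h i j = k i j) \<Longrightarrow> diag P k"
  by (simp add: diag_def)

lemma diag_wpow: "diag P h \<Longrightarrow> diag (wpow P n) (\<lambda>i j. h i j ^ n)"
proof (induction n)
  case 0 thus ?case using diag_sc[of 1] by (simp add: wconst_sc)
next
  case (Suc n) thus ?case using diag_wmul[of P h "wpow P n"] by simp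
qed

definition om1 :: "real \<times> real \<Rightarrow> complex" where "om1 \<omega> = complex_of_real (fst \<omega>)"
definition om2 :: "real \<times> real \<Rightarrow> complex" where "om2 \<omega> = complex_of_real (snd \<omega>)"

lemma diag_euler: "diag (euler_s \<omega>) (\<lambda>i j. om1 \<omega> * of_nat i + om2 \<omega> * of_nat j)"
  unfolding euler_s_def om1_def om2_def by (rule diag_add[OF diag_thx diag_thy])

lemma diag_poly_in_s: "diag (poly_in_s \<omega> p) (\<lambda>i j. poly p (om1 \<omega> * of_nat i + om2 \<omega> * of_nat j))"
proof -
  have "diag (poly_in_s \<omega> p) (\<lambda>i j. \<Sum>k\<le>degree p. coeff p k * (om1 \<omega> * of_nat i + om2 \<omega> * of_nat j) ^ k)"
    unfolding poly_in_s_def wconst_sc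
    by (rule diag_sum, rule diag_wmul[OF diag_sc diag_wpow[OF diag_euler]])
  thus ?thesis by (rule diag_cong) (simp add: poly_altdef)
qed

lemma poly_in_s_add: "poly_in_s \<omega> (p + q) = poly_in_s \<omega> p + poly_in_s \<omega> q"
  by (rule diag_unique[OF diag_poly_in_s], rule diag_cong[OF diag_add[OF diag_poly_in_s diag_poly_in_s]]) simp

lemma poly_in_s_mult: "poly_in_s \<omega> (p * q) = wmul (poly_in_s \<omega> p) (poly_in_s \<omega> q)"
  by (rule diag_unique[OF diag_poly_in_s], rule diag_cong[OF diag_wmul[OF diag_poly_in_s diag_poly_in_s]]) simp

lemma poly_in_s_diff: "poly_in_s \<omega> (p - q) = poly_in_s \<omega> p - poly_in_s \<omega> q"
  using poly_in_s_add[of \<omega> "p - q" q] by simp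

lemma monic_dvd_antisym:
  fixes p q :: "complex poly"
  assumes "q dvd p" "p dvd q" "lead_coeff p = 1" "lead_coeff q = 1 \<and> X"
  shows "q = p"
proof -
  obtain k where k: "p = q * k" using assms(1) by (auto elim: dvdE)
  obtain k' where k': "q = p * k'" using assms(2) by (auto elim: dvdE)
  have pnz: "p \<noteq> 0" using assms(3) by auto
  have "p * 1 = p * (k' * k)" using k k' by (simp add: mult.assoc)
  hence "k' * k = 1" using pnz by (metis mult_left_cancel)
  hence u: "is_unit k" by (metis dvd_triv_right)
  have knz: "k \<noteq> 0" using u by auto
  have dk: "degree k = 0" using u is_unit_iff_degree[OF knz] by simp
  have "lead_coeff p = lead_coeff q * lead_coeff k" using k by (simp add: lead_coeff_mult)
  hence "lead_coeff k = 1" using assms(3,4) by simp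
  hence "k = 1" using degree_0_id[OF dk] dk by (simp add: one_pCons)
  thus ?thesis using k by simp
qed

definition Jset :: "real \<times> real \<Rightarrow> weyl set \<Rightarrow> complex poly set" where
  "Jset \<omega> I = {p. poly_in_s \<omega> p \<in> initial_ideal \<omega> I}"

lemma J_diff: "p \<in> Jset \<omega> I \<Longrightarrow> q \<in> Jset \<omega> I \<Longrightarrow> p - q \<in> Jset \<omega> I"
  unfolding Jset_def initial_ideal_def by (simp add: poly_in_s_diff lig_diff)

lemma J_mult: "p \<in> Jset \<omega> I \<Longrightarrow> q * p \<in> Jset \<omega> I"
  unfolding Jset_def initial_ideal_def by (simp add: poly_in_s_mult lig_mul)

lemma b_function_dvd:
  assumes R: "R \<in> Jset \<omega> I" "R \<noteq> 0"
  shows "b_function I \<omega> dvd R"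
proof -
  obtain b0 where b0: "b0 \<in> Jset \<omega> I \<and> b0 \<noteq> 0" and minb: "\<And>q. q \<in> Jset \<omega> I \<and> q \<noteq> 0 \<Longrightarrow> degree b0 \<le> degree q"
    using ex_has_least_nat[of "\<lambda>q. q \<in> Jset \<omega> I \<and> q \<noteq> 0" R degree] R by blast
  define b where "b = smult (inverse (lead_coeff b0)) b0"
  have lb: "lead_coeff b = 1" using b0 by (simp add: b_def lead_coeff_smult)
  have "b = [:inverse (lead_coeff b0):] * b0" by (simp add: b_def)
  hence bJ: "b \<in> Jset \<omega> I" using J_mult b0 by metis
  have bnz: "b \<noteq> 0" using lb by auto
  have db: "degree b = degree b0" using b0 by (simp add: b_def)
  have eq: "Jset \<omega> I = {p. b dvd p}"
  proof (intro set_eqI iffI)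
    fix p assume pJ: "p \<in> Jset \<omega> I"
    have "p mod b = p - (p div b) * b" by (metis minus_div_mult_eq_mod)
    hence mJ: "p mod b \<in> Jset \<omega> I" using J_diff[OF pJ J_mult[OF bJ]] by simp
    have "p mod b = 0"
    proof (rule ccontr)
      assume nz: "p mod b \<noteq> 0"
      hence "degree (p mod b) < degree b" using degree_mod_less'[OF bnz] by blast
      moreover have "degree b0 \<le> degree (p mod b)" using minb mJ nz by blast
      ultimately show False using db by simp
    qed
    thus "p \<in> {p. b dvd p}" by (simp add: mod_eq_0_iff_dvd)
  next
    fix p assume "p \<in> {p. b dvd p}"
    then obtain k where "p = b * k" by auto
    thus "p \<in> Jset \<omega> I" using J_mult[OF bJ, of k] by (simp add: mult.commute)
  qed
  have uniq: "b' = b" if "lead_coeff b' = 1 \<and> {p. poly_in_s \<omega> p \<in> initial_ideal \<omega> I} = {p. b' dvd p}" for b'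
  proof -
    have e2: "{p. b' dvd p} = {p. b dvd p}" using that eq unfolding Jset_def by simp
    have "b \<in> {p. b dvd p}" by simp
    hence "b \<in> {p. b' dvd p}" by (simp only: e2)
    hence "b' dvd b" by simp
    moreover have "b' \<in> {p. b' dvd p}" by simp
    hence "b' \<in> {p. b dvd p}" by (simp only: e2)
    hence "b dvd b'" by simp
    ultimately show "b' = b" using lb that
      by (rule monic_dvd_antisym)
  qed
  have "b_function I \<omega> = b"
    unfolding b_function_def
  proof (rule the_equality)
    show "lead_coeff b = 1 \<and> {p. poly_in_s \<omega> p \<in> initial_ideal \<omega> I} = {p. b dvd p}"
      using lb eq unfolding Jset_def by simp
  qed (rule uniq)
  moreover have "R \<in> {p. b dvd p}" using R(1) by (simp only: eq)
  ultimately show ?thesis by simp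
qed



definition realizable :: "(nat \<Rightarrow> nat \<Rightarrow> complex) \<Rightarrow> bool" where
  "realizable h \<longleftrightarrow> (\<exists>P. diag P h)"

definition linf :: "complex \<Rightarrow> complex \<Rightarrow> complex \<Rightarrow> nat \<Rightarrow> nat \<Rightarrow> complex" where
  "linf \<alpha> \<beta> \<gamma> i j = \<alpha> * of_nat i + \<beta> * of_nat j + \<gamma>"

definition linop :: "complex \<Rightarrow> complex \<Rightarrow> complex \<Rightarrow> weyl" where
  "linop \<alpha> \<beta> \<gamma> = Poly_Mapping.single (1,0,1,0) \<alpha> + Poly_Mapping.single (0,1,0,1) \<beta> + sc \<gamma>"

lemma diag_linop: "diag (linop \<alpha> \<beta> \<gamma>) (linf \<alpha> \<beta> \<gamma>)"
  unfolding linop_def linf_def by (rule diag_add[OF diag_add[OF diag_thx diag_thy] diag_sc])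

lemma real_lin: "realizable (linf \<alpha> \<beta> \<gamma>)"
  using diag_linop realizable_def by blast

lemma real_cong: "realizable h \<Longrightarrow> (\<And>i j. h i j = k i j) \<Longrightarrow> realizable k"
  unfolding realizable_def using diag_cong by blast

lemma real_add: "realizable h \<Longrightarrow> realizable k \<Longrightarrow> realizable (\<lambda>i j. h i j + k i j)"
  unfolding realizable_def using diag_add by blast

lemma real_mult: "realizable h \<Longrightarrow> realizable k \<Longrightarrow> realizable (\<lambda>i j. h i j * k i j)"
  unfolding realizable_def using diag_wmul by blast

lemma real_const: "realizable (\<lambda>i j. c)"
  unfolding realizable_def using diag_sc by blast

lemma real_diff: "realizable h \<Longrightarrow> realizable k \<Longrightarrow> realizable (\<lambda>i j. h i j - k i j)"
proof -
  assume h: "realizable h" and k: "realizable k"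
  have "realizable (\<lambda>i j. h i j + (-1) * k i j)" by (rule real_add[OF h real_mult[OF real_const k]])
  thus ?thesis by (rule real_cong) simp
qed

lemma real_prod: "(\<And>t. t \<in> T \<Longrightarrow> realizable (h t)) \<Longrightarrow> realizable (\<lambda>i j. \<Prod>t\<in>T. h t i j)"
proof (induction T rule: infinite_finite_induct)
  case (infinite A) thus ?case using real_const[of 1] by simp
next
  case empty thus ?case using real_const[of 1] by simp
next
  case (insert x F)
  thus ?case using real_mult[of "h x" "\<lambda>i j. \<Prod>t\<in>F. h t i j"] by simp
qed

definition redf :: "complex \<Rightarrow> complex \<Rightarrow> complex \<Rightarrow> complex \<Rightarrow> nat \<Rightarrow> complex" where
  "redf d \<alpha> \<beta> \<gamma> i = \<alpha> * of_nat i - \<beta> * (of_nat i + d) + \<gamma>"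

lemma reduce:
  fixes \<alpha> \<beta> \<gamma> :: "'a \<Rightarrow> complex" and d :: complex
  assumes "finite T"
  shows "\<exists>q. realizable q \<and> (\<forall>i j. (\<Prod>t\<in>T. linf (\<alpha> t) (\<beta> t) (\<gamma> t) i j)
      = (\<Prod>t\<in>T. redf d (\<alpha> t) (\<beta> t) (\<gamma> t) i) + q i j * (of_nat i + of_nat j + d))"
  using assms
proof (induction T rule: finite_induct)
  case empty
  show ?case by (rule exI[of _ "\<lambda>i j. 0"]) (simp add: real_const)
next
  case (insert t T)
  then obtain q where q: "realizable q" and eq: "\<And>i j. (\<Prod>t\<in>T. linf (\<alpha> t) (\<beta> t) (\<gamma> t) i j)
      = (\<Prod>t\<in>T. redf d (\<alpha> t) (\<beta> t) (\<gamma> t) i) + q i j * (of_nat i + of_nat j + d)" by blast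
  define r where "r = (\<lambda>(i::nat) (j::nat). \<Prod>t\<in>T. redf d (\<alpha> t) (\<beta> t) (\<gamma> t) i)"
  have rr: "realizable r"
  proof -
    have "realizable (\<lambda>i j. \<Prod>t\<in>T. linf (\<alpha> t - \<beta> t) 0 (\<gamma> t - \<beta> t * d) i j)"
      by (rule real_prod, rule real_lin)
    thus ?thesis by (rule real_cong) (simp add: r_def redf_def linf_def algebra_simps)
  qed
  define q' where "q' = (\<lambda>i j. \<beta> t * r i j + linf (\<alpha> t) (\<beta> t) (\<gamma> t) i j * q i j)"
  have "realizable q'" unfolding q'_def
    by (rule real_add[OF real_mult[OF real_const rr] real_mult[OF real_lin q]])
  moreover have "(\<Prod>t\<in>insert t T. linf (\<alpha> t) (\<beta> t) (\<gamma> t) i j)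
      = (\<Prod>t\<in>insert t T. redf d (\<alpha> t) (\<beta> t) (\<gamma> t) i) + q' i j * (of_nat i + of_nat j + d)" for i j
  proof -
    have "linf (\<alpha> t) (\<beta> t) (\<gamma> t) i j = redf d (\<alpha> t) (\<beta> t) (\<gamma> t) i + \<beta> t * (of_nat i + of_nat j + d)"
      by (simp add: linf_def redf_def algebra_simps)
    thus ?thesis using insert eq[of i j] by (simp add: q'_def r_def algebra_simps)
  qed
  ultimately show ?case by blast
qed

lemma combine:
  fixes \<alpha> \<beta> \<gamma> :: "'a \<Rightarrow> complex" and \<alpha>' \<beta>' \<gamma>' :: "'b \<Rightarrow> complex" and d :: complex
  assumes L: "L = left_ideal_gen S"
    and E: "E \<in> L" "diag E (\<lambda>i j. of_nat i + of_nat j + d)"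
    and Z: "Z \<in> L" "diag Z (\<lambda>i j. \<Prod>t\<in>T. linf (\<alpha> t) (\<beta> t) (\<gamma> t) i j)" "finite T"
    and X: "diag X (\<lambda>i j. \<Prod>t\<in>T'. linf (\<alpha>' t) (\<beta>' t) (\<gamma>' t) i j)" "finite T'"
    and w: "realizable w"
    and div: "\<And>i j. (\<Prod>t\<in>T'. redf d (\<alpha>' t) (\<beta>' t) (\<gamma>' t) i) = w i j * (\<Prod>t\<in>T. redf d (\<alpha> t) (\<beta> t) (\<gamma> t) i)"
  shows "X \<in> L"
proof -
  obtain qz where qz: "realizable qz" and ez: "\<And>i j. (\<Prod>t\<in>T. linf (\<alpha> t) (\<beta> t) (\<gamma> t) i j)
      = (\<Prod>t\<in>T. redf d (\<alpha> t) (\<beta> t) (\<gamma> t) i) + qz i j * (of_nat i + of_nat j + d)"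
    using reduce[OF Z(3)] by blast
  obtain qx where qx: "realizable qx" and ex: "\<And>i j. (\<Prod>t\<in>T'. linf (\<alpha>' t) (\<beta>' t) (\<gamma>' t) i j)
      = (\<Prod>t\<in>T'. redf d (\<alpha>' t) (\<beta>' t) (\<gamma>' t) i) + qx i j * (of_nat i + of_nat j + d)"
    using reduce[OF X(2)] by blast
  obtain W where W: "diag W w" using w realizable_def by blast
  have "realizable (\<lambda>i j. qx i j - w i j * qz i j)" by (rule real_diff[OF qx real_mult[OF w qz]])
  then obtain A where A: "diag A (\<lambda>i j. qx i j - w i j * qz i j)" using realizable_def by blast
  have "diag (wmul W Z + wmul A E) (\<lambda>i j. w i j * (\<Prod>t\<in>T. linf (\<alpha> t) (\<beta> t) (\<gamma> t) i j) +
      (qx i j - w i j * qz i j) * (of_nat i + of_nat j + d))"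
    by (rule diag_add[OF diag_wmul[OF W Z(2)] diag_wmul[OF A E(2)]])
  hence "diag (wmul W Z + wmul A E) (\<lambda>i j. \<Prod>t\<in>T'. linf (\<alpha>' t) (\<beta>' t) (\<gamma>' t) i j)"
  proof (rule diag_cong)
    fix i j
    show "w i j * (\<Prod>t\<in>T. linf (\<alpha> t) (\<beta> t) (\<gamma> t) i j) + (qx i j - w i j * qz i j) * (of_nat i + of_nat j + d)
      = (\<Prod>t\<in>T'. linf (\<alpha>' t) (\<beta>' t) (\<gamma>' t) i j)"
      unfolding ex ez by (simp add: algebra_simps) (metis div)
  qed
  hence "X = wmul W Z + wmul A E" using X(1) diag_unique by blast
  thus ?thesis using lig_add lig_mul E(1) Z(1) L by blast
qed



lemma init_split:
  assumes P: "P = P0 + P1" and nz: "P0 \<noteq> 0"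
    and w0: "\<And>m. m \<in> Poly_Mapping.keys P0 \<Longrightarrow> wweight \<omega> m = w"
    and w1: "\<And>m. m \<in> Poly_Mapping.keys P1 \<Longrightarrow> wweight \<omega> m < w"
  shows "initial_form \<omega> P = P0"
proof -
  have disj: "m \<notin> Poly_Mapping.keys P1" if "m \<in> Poly_Mapping.keys P0" for m
    using w0[OF that] w1 by fastforce
  have l1: "Poly_Mapping.lookup P m = Poly_Mapping.lookup P0 m" if "m \<in> Poly_Mapping.keys P0" for m
    using disj[OF that] P by (simp add: lookup_add in_keys_iff)
  have l2: "Poly_Mapping.lookup P m = Poly_Mapping.lookup P1 m" if "m \<notin> Poly_Mapping.keys P0" for m
    using that P by (simp add: lookup_add in_keys_iff)
  have kP: "Poly_Mapping.keys P = Poly_Mapping.keys P0 \<union> Poly_Mapping.keys P1"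
  proof (intro set_eqI iffI)
    fix m assume "m \<in> Poly_Mapping.keys P"
    thus "m \<in> Poly_Mapping.keys P0 \<union> Poly_Mapping.keys P1"
      using l2[of m] by (cases "m \<in> Poly_Mapping.keys P0") (auto simp: in_keys_iff)
  next
    fix m assume "m \<in> Poly_Mapping.keys P0 \<union> Poly_Mapping.keys P1"
    thus "m \<in> Poly_Mapping.keys P"
      using l1[of m] l2[of m] disj by (cases "m \<in> Poly_Mapping.keys P0") (auto simp: in_keys_iff)
  qed
  obtain m0 where m0: "m0 \<in> Poly_Mapping.keys P0" using nz by (metis keys_eq_empty ex_in_conv)
  have Pnz: "P \<noteq> 0" using kP m0 by auto
  have Mx: "Max (wweight \<omega> ` Poly_Mapping.keys P) = w"
  proof (rule Max_eqI)
    show "finite (wweight \<omega> ` Poly_Mapping.keys P)" by simp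
    show "y \<le> w" if "y \<in> wweight \<omega> ` Poly_Mapping.keys P" for y
      using that kP w0 w1 by (force simp: less_imp_le)
    show "w \<in> wweight \<omega> ` Poly_Mapping.keys P" using m0 kP w0[OF m0] by force
  qed
  have S: "{m \<in> Poly_Mapping.keys P. wweight \<omega> m = w} = Poly_Mapping.keys P0"
    using kP w0 w1 by fastforce
  have "initial_form \<omega> P = (\<Sum>m\<in>Poly_Mapping.keys P0. Poly_Mapping.single m (Poly_Mapping.lookup P m))"
    unfolding initial_form_def using Pnz Mx S by simp
  also have "\<dots> = (\<Sum>m\<in>Poly_Mapping.keys P0. Poly_Mapping.single m (Poly_Mapping.lookup P0 m))"
    by (rule sum.cong[OF refl]) (simp add: l1)
  also have "\<dots> = P0" by (rule pm_expand[symmetric])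
  finally show ?thesis .
qed

lemma init_homog:
  assumes "\<And>m. m \<in> Poly_Mapping.keys P \<Longrightarrow> wweight \<omega> m = w"
  shows "initial_form \<omega> P = P"
proof (cases "P = 0")
  case True thus ?thesis by (simp add: initial_form_def)
next
  case False thus ?thesis using init_split[of P P 0 \<omega> w] assms by simp
qed

lemma init_mem: "P \<in> I \<Longrightarrow> initial_form \<omega> P \<in> initial_ideal \<omega> I"
  unfolding initial_ideal_def by (rule lig_gen) simp

lemma keys_single_sub: "Poly_Mapping.keys (Poly_Mapping.single m v) \<subseteq> {m}"
  by simp



definition fxf :: "bipoly \<Rightarrow> complex \<Rightarrow> complex \<Rightarrow> complex" where
  "fxf f x y = (\<Sum>(i,j)\<in>Poly_Mapping.keys f. Poly_Mapping.lookup f (i,j) * of_nat i * x ^ (i - 1) * y ^ j)"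

definition fyf :: "bipoly \<Rightarrow> complex \<Rightarrow> complex \<Rightarrow> complex" where
  "fyf f x y = (\<Sum>(i,j)\<in>Poly_Mapping.keys f. Poly_Mapping.lookup f (i,j) * of_nat j * x ^ i * y ^ (j - 1))"

lemma DERIV_x: "((\<lambda>t. bipoly_eval f t y) has_field_derivative fxf f x y) (at x)"
  unfolding bipoly_eval_def fxf_def
proof (rule DERIV_sum)
  fix n assume "n \<in> Poly_Mapping.keys f"
  obtain i j where n: "n = (i,j)" by (cases n) auto
  have d: "((\<lambda>t. t ^ i) has_field_derivative of_nat i * x ^ (i - 1)) (at x)"
    using DERIV_power[OF DERIV_ident, of i x UNIV] by simp
  have "((\<lambda>t. (Poly_Mapping.lookup f (i,j) * y ^ j) * t ^ i) has_field_derivative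
      (Poly_Mapping.lookup f (i,j) * y ^ j) * (of_nat i * x ^ (i - 1))) (at x)"
    by (rule DERIV_cmult[OF d])
  thus "((\<lambda>t. case n of (i, j) \<Rightarrow> Poly_Mapping.lookup f (i, j) * t ^ i * y ^ j) has_field_derivative
          (case n of (i, j) \<Rightarrow> Poly_Mapping.lookup f (i, j) * of_nat i * x ^ (i - 1) * y ^ j)) (at x)"
    by (simp add: n ac_simps)
qed

lemma DERIV_y: "((\<lambda>t. bipoly_eval f x t) has_field_derivative fyf f x y) (at y)"
  unfolding bipoly_eval_def fyf_def
proof (rule DERIV_sum)
  fix n assume "n \<in> Poly_Mapping.keys f"
  obtain i j where n: "n = (i,j)" by (cases n) auto
  have d: "((\<lambda>t. t ^ j) has_field_derivative of_nat j * y ^ (j - 1)) (at y)"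
    using DERIV_power[OF DERIV_ident, of j y UNIV] by simp
  have "((\<lambda>t. (Poly_Mapping.lookup f (i,j) * x ^ i) * t ^ j) has_field_derivative
      (Poly_Mapping.lookup f (i,j) * x ^ i) * (of_nat j * y ^ (j - 1))) (at y)"
    by (rule DERIV_cmult[OF d])
  thus "((\<lambda>t. case n of (i, j) \<Rightarrow> Poly_Mapping.lookup f (i, j) * x ^ i * t ^ j) has_field_derivative
          (case n of (i, j) \<Rightarrow> Poly_Mapping.lookup f (i, j) * of_nat j * x ^ i * y ^ (j - 1))) (at y)"
    by (simp add: n ac_simps)
qed

definition invf :: "bipoly \<Rightarrow> complex \<Rightarrow> complex \<Rightarrow> complex" where
  "invf f = (\<lambda>u v. 1 / bipoly_eval f u v)"

lemma pdx_inv: "bipoly_eval f x y \<noteq> 0 \<Longrightarrow> pdx (invf f) x y = - fxf f x y / (bipoly_eval f x y)^2"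
proof -
  assume nz: "bipoly_eval f x y \<noteq> 0"
  have "((\<lambda>t. inverse (bipoly_eval f t y)) has_field_derivative - (fxf f x y * inverse (bipoly_eval f x y ^ Suc (Suc 0)))) (at x)"
    by (rule DERIV_inverse_fun[OF DERIV_x nz])
  hence "deriv (\<lambda>t. inverse (bipoly_eval f t y)) x = - (fxf f x y * inverse (bipoly_eval f x y ^ Suc (Suc 0)))"
    by (rule DERIV_imp_deriv)
  thus ?thesis unfolding pdx_def invf_def by (simp add: inverse_eq_divide power2_eq_square)
qed

lemma pdy_inv: "bipoly_eval f x y \<noteq> 0 \<Longrightarrow> pdy (invf f) x y = - fyf f x y / (bipoly_eval f x y)^2"
proof -
  assume nz: "bipoly_eval f x y \<noteq> 0"
  have "((\<lambda>t. inverse (bipoly_eval f x t)) has_field_derivative - (fyf f x y * inverse (bipoly_eval f x y ^ Suc (Suc 0)))) (at y)"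
    by (rule DERIV_inverse_fun[OF DERIV_y nz])
  hence "deriv (\<lambda>t. inverse (bipoly_eval f x t)) y = - (fyf f x y * inverse (bipoly_eval f x y ^ Suc (Suc 0)))"
    by (rule DERIV_imp_deriv)
  thus ?thesis unfolding pdy_def invf_def by (simp add: inverse_eq_divide power2_eq_square)
qed

definition wterm :: "(complex \<Rightarrow> complex \<Rightarrow> complex) \<Rightarrow> complex \<Rightarrow> complex \<Rightarrow> nat \<times> nat \<times> nat \<times> nat \<Rightarrow> complex \<Rightarrow> complex" where
  "wterm F x y m v = (case m of (a,b,c,e) \<Rightarrow> v * x ^ a * y ^ b * (((pdx ^^ c) ((pdy ^^ e) F)) x y))"

lemma wterm_add: "wterm F x y m (u + v) = wterm F x y m u + wterm F x y m v"
  by (simp add: wterm_def distrib_right split: prod.splits)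

lemma wact_wterm: "wact P F x y = (\<Sum>m\<in>Poly_Mapping.keys P. wterm F x y m (Poly_Mapping.lookup P m))"
  unfolding wact_def wterm_def by (simp add: case_prod_beta)

lemma wact_add: "wact (P + Q) F x y = wact P F x y + wact Q F x y"
proof -
  define S where "S = Poly_Mapping.keys P \<union> Poly_Mapping.keys Q"
  have F0: "\<And>m. wterm F x y m 0 = 0" by (simp add: wterm_def split: prod.splits)
  have fin: "finite S" by (simp add: S_def)
  have e: "(\<Sum>m\<in>Poly_Mapping.keys X. wterm F x y m (Poly_Mapping.lookup X m)) = (\<Sum>m\<in>S. wterm F x y m (Poly_Mapping.lookup X m))"
    if "Poly_Mapping.keys X \<subseteq> S" for X
    using sum_keys_superset[OF that fin, of "wterm F x y"] F0 by simp
  have kPQ: "Poly_Mapping.keys (P + Q) \<subseteq> S" using keys_add[of P Q] by (auto simp: S_def)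
  have "wact (P + Q) F x y = (\<Sum>m\<in>S. wterm F x y m (Poly_Mapping.lookup (P+Q) m))"
    unfolding wact_wterm by (rule e[OF kPQ])
  also have "\<dots> = (\<Sum>m\<in>S. wterm F x y m (Poly_Mapping.lookup P m)) + (\<Sum>m\<in>S. wterm F x y m (Poly_Mapping.lookup Q m))"
    by (simp add: lookup_add wterm_add sum.distrib)
  also have "\<dots> = wact P F x y + wact Q F x y"
    unfolding wact_wterm using e[of P] e[of Q] by (simp add: S_def)
  finally show ?thesis .
qed

lemma wact_zero: "wact 0 F x y = 0" by (simp add: wact_def)

lemma wact_sum: "wact (\<Sum>k\<in>A. P k) F x y = (\<Sum>k\<in>A. wact (P k) F x y)"
  by (induction A rule: infinite_finite_induct) (auto simp: wact_add wact_zero)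

lemma wact_single: "wact (Poly_Mapping.single (a,b,c,e) v) F x y = v * x ^ a * y ^ b * (((pdx ^^ c) ((pdy ^^ e) F)) x y)"
  by (cases "v = 0") (simp_all add: wact_def)



lemma Ann_invf: "Ann_inv f = {P. \<forall>x y. bipoly_eval f x y \<noteq> 0 \<longrightarrow> wact P (invf f) x y = 0}"
  unfolding Ann_inv_def invf_def ..

lemma x_pow_pred: "x * (c * of_nat i * x ^ (i - 1) * z) = c * of_nat i * (x::complex) ^ i * z"
  by (cases i) (simp_all add: ac_simps)

lemma y_pow_pred: "y * (c * of_nat j * x ^ i * y ^ (j - 1)) = c * of_nat j * x ^ i * (y::complex) ^ j"
  by (cases j) (simp_all add: ac_simps)

lemma euler_identity:
  assumes "homogeneous_of_degree f d"
  shows "x * fxf f x y + y * fyf f x y = of_nat d * bipoly_eval f x y"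
proof -
  have "x * fxf f x y + y * fyf f x y = (\<Sum>(i,j)\<in>Poly_Mapping.keys f. Poly_Mapping.lookup f (i,j) * of_nat (i + j) * x ^ i * y ^ j)"
    unfolding fxf_def fyf_def sum_distrib_left sum.distrib[symmetric]
  proof (rule sum.cong[OF refl])
    fix n assume "n \<in> Poly_Mapping.keys f"
    obtain i j where n: "n = (i,j)" by (cases n) auto
    have 1: "x * (Poly_Mapping.lookup f (i,j) * of_nat i * x ^ (i - 1) * y ^ j) = Poly_Mapping.lookup f (i,j) * of_nat i * x ^ i * y ^ j"
      by (rule x_pow_pred)
    have 2: "y * (Poly_Mapping.lookup f (i,j) * of_nat j * x ^ i * y ^ (j - 1)) = Poly_Mapping.lookup f (i,j) * of_nat j * x ^ i * y ^ j"
      by (rule y_pow_pred)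
    show "x * (case n of (i, j) \<Rightarrow> Poly_Mapping.lookup f (i, j) * of_nat i * x ^ (i - 1) * y ^ j) +
          y * (case n of (i, j) \<Rightarrow> Poly_Mapping.lookup f (i, j) * of_nat j * x ^ i * y ^ (j - 1)) =
          (case n of (i, j) \<Rightarrow> Poly_Mapping.lookup f (i, j) * of_nat (i + j) * x ^ i * y ^ j)"
      unfolding n prod.case 1 2 by (simp add: algebra_simps)
  qed
  also have "\<dots> = of_nat d * bipoly_eval f x y"
    unfolding bipoly_eval_def sum_distrib_left
    by (rule sum.cong[OF refl]) (use assms in \<open>auto simp: homogeneous_of_degree_def\<close>)
  finally show ?thesis .
qed

definition Eop :: "nat \<Rightarrow> weyl" where
  "Eop d = Poly_Mapping.single (1,0,1,0) 1 + Poly_Mapping.single (0,1,0,1) 1 + sc (of_nat d)"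

lemma Eop_Ann:
  assumes "homogeneous_of_degree f d"
  shows "Eop d \<in> Ann_inv f"
  unfolding Ann_invf
proof (intro CollectI allI impI)
  fix x y assume nz: "bipoly_eval f x y \<noteq> 0"
  have "wact (Eop d) (invf f) x y = x * pdx (invf f) x y + y * pdy (invf f) x y + of_nat d * invf f x y"
    unfolding Eop_def by (simp add: wact_add wact_single)
  also have "\<dots> = - (x * fxf f x y + y * fyf f x y) / (bipoly_eval f x y)^2 + of_nat d / bipoly_eval f x y"
    using nz unfolding pdx_inv[OF nz] pdy_inv[OF nz] unfolding invf_def by (simp add: field_simps)
  also have "\<dots> = 0" using nz by (simp add: euler_identity[OF assms] power2_eq_square)
  finally show "wact (Eop d) (invf f) x y = 0" .
qed

lemma diag_Eop: "diag (Eop d) (\<lambda>i j. of_nat i + of_nat j + of_nat d)"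
proof -
  have "diag (Eop d) (linf 1 1 (of_nat d))" unfolding Eop_def using diag_linop[of 1 1 "of_nat d"] by (simp add: linop_def)
  thus ?thesis by (rule diag_cong) (simp add: linf_def)
qed


lemma sum_pair_cong: "(\<And>i j. (i,j) \<in> K \<Longrightarrow> f i j = g i j) \<Longrightarrow> (\<Sum>(i,j)\<in>K. f i j) = (\<Sum>(i,j)\<in>K. g i j)"
  by (rule sum.cong) auto

lemma sum_pair_cong2: "(\<And>i j. (i,j) \<in> K \<Longrightarrow> f (i,j) = g (i,j)) \<Longrightarrow> sum f K = sum g K"
  by (rule sum.cong) auto

lemma funpow_simps1: "(pdx ^^ 1) ((pdy ^^ 0) F) = pdx F" "(pdx ^^ 0) ((pdy ^^ 1) F) = pdy F" "(pdx ^^ 0) ((pdy ^^ 0) F) = F"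
  by simp_all

definition Pop :: "bipoly \<Rightarrow> nat \<Rightarrow> weyl" where
  "Pop f a = (\<Sum>(i,j)\<in>Poly_Mapping.keys f.
      Poly_Mapping.single (i - a + 1, j - 1, 1, 0) (Poly_Mapping.lookup f (i,j) * of_nat j)
    + Poly_Mapping.single (i - a, j, 0, 1) (- (Poly_Mapping.lookup f (i,j) * of_nat (i - a)))
    + Poly_Mapping.single (i - a, j - 1, 0, 0) (of_nat a * Poly_Mapping.lookup f (i,j) * of_nat j))"

lemma Pop_Ann:
  assumes amin: "\<And>i j. (i,j) \<in> Poly_Mapping.keys f \<Longrightarrow> a \<le> i"
  shows "Pop f a \<in> Ann_inv f"
  unfolding Ann_invf
proof (intro CollectI allI impI)
  fix x y assume nz: "bipoly_eval f x y \<noteq> 0"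
  define F where "F = bipoly_eval f x y"
  define PX where "PX = pdx (invf f) x y"
  define PY where "PY = pdy (invf f) x y"
  define IV where "IV = invf f x y"
  define Gy where "Gy = (\<Sum>(i,j)\<in>Poly_Mapping.keys f. Poly_Mapping.lookup f (i,j) * of_nat j * x ^ (i - a) * y ^ (j - 1))"
  define Gxp where "Gxp = (\<Sum>(i,j)\<in>Poly_Mapping.keys f. Poly_Mapping.lookup f (i,j) * of_nat (i - a) * x ^ (i - a) * y ^ j)"
  let ?c = "\<lambda>i j. Poly_Mapping.lookup f (i,j)"
  have "wact (Pop f a) (invf f) x y = (\<Sum>(i,j)\<in>Poly_Mapping.keys f.
       (x * (?c i j * of_nat j * x ^ (i - a) * y ^ (j - 1))) * PX
     + (- (?c i j * of_nat (i - a) * x ^ (i - a) * y ^ j)) * PY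
     + (of_nat a * (?c i j * of_nat j * x ^ (i - a) * y ^ (j - 1))) * IV)"
    unfolding Pop_def wact_sum
    by (rule sum.cong[OF refl]) (auto simp: wact_add wact_single PX_def PY_def IV_def ac_simps split: prod.splits)
  also have "\<dots> = x * Gy * PX - Gxp * PY + of_nat a * Gy * IV"
    unfolding Gy_def Gxp_def sum_distrib_left sum_distrib_right
    unfolding sum_subtractf[symmetric] sum.distrib[symmetric]
    by (rule sum.cong[OF refl]) (auto simp: algebra_simps split: prod.splits)
  finally have w: "wact (Pop f a) (invf f) x y = x * Gy * PX - Gxp * PY + of_nat a * Gy * IV" .
  have k1: "x * (?c i j * of_nat i * x ^ (i - 1) * y ^ j) =
       of_nat a * (?c i j * x ^ i * y ^ j) + x ^ a * (?c i j * of_nat (i - a) * x ^ (i - a) * y ^ j)"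
    if ij: "(i,j) \<in> Poly_Mapping.keys f" for i j
  proof -
    have ai: "a \<le> i" using amin[OF ij] .
    have "x ^ a * x ^ (i - a) = x ^ i" using ai by (simp add: power_add[symmetric])
    moreover have "of_nat i = (of_nat a + of_nat (i - a) :: complex)" using ai by (simp add: of_nat_diff)
    ultimately show ?thesis
      unfolding x_pow_pred by (simp add: algebra_simps)
  qed
  have i1: "x * fxf f x y = of_nat a * F + x ^ a * Gxp"
    unfolding F_def fxf_def Gxp_def bipoly_eval_def sum_distrib_left sum.distrib[symmetric]
    by (rule sum_pair_cong2) (simp only: prod.case k1)
  have k2: "?c i j * of_nat j * x ^ i * y ^ (j - 1) = x ^ a * (?c i j * of_nat j * x ^ (i - a) * y ^ (j - 1))"
    if ij: "(i,j) \<in> Poly_Mapping.keys f" for i j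
  proof -
    have "x ^ a * x ^ (i - a) = x ^ i" using amin[OF ij] by (simp add: power_add[symmetric])
    thus ?thesis by (metis mult.assoc mult.commute)
  qed
  have i2: "fyf f x y = x ^ a * Gy"
    unfolding fyf_def Gy_def sum_distrib_left
    by (rule sum_pair_cong2) (simp only: prod.case k2)
  have e: "PX = - fxf f x y / F^2" "PY = - fyf f x y / F^2" "IV = 1 / F"
    using pdx_inv[OF nz] pdy_inv[OF nz] by (simp_all add: PX_def PY_def IV_def F_def invf_def)
  have Fnz: "F \<noteq> 0" using nz by (simp add: F_def)
  have "x * Gy * PX - Gxp * PY + of_nat a * Gy * IV = (- Gy * (x * fxf f x y) + Gxp * fyf f x y + of_nat a * Gy * F) / F^2"
    unfolding e using Fnz by (simp add: field_simps power2_eq_square)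
  also have "\<dots> = 0" unfolding i1 i2 by (simp add: algebra_simps)
  finally show "wact (Pop f a) (invf f) x y = 0" using w by simp
qed

definition Qop :: "bipoly \<Rightarrow> nat \<Rightarrow> weyl" where
  "Qop f b = (\<Sum>(i,j)\<in>Poly_Mapping.keys f.
      Poly_Mapping.single (i - 1, j - b + 1, 0, 1) (Poly_Mapping.lookup f (i,j) * of_nat i)
    + Poly_Mapping.single (i, j - b, 1, 0) (- (Poly_Mapping.lookup f (i,j) * of_nat (j - b)))
    + Poly_Mapping.single (i - 1, j - b, 0, 0) (of_nat b * Poly_Mapping.lookup f (i,j) * of_nat i))"

lemma Qop_Ann:
  assumes bmin: "\<And>i j. (i,j) \<in> Poly_Mapping.keys f \<Longrightarrow> b \<le> j"
  shows "Qop f b \<in> Ann_inv f"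
  unfolding Ann_invf
proof (intro CollectI allI impI)
  fix x y assume nz: "bipoly_eval f x y \<noteq> 0"
  define F where "F = bipoly_eval f x y"
  define PX where "PX = pdx (invf f) x y"
  define PY where "PY = pdy (invf f) x y"
  define IV where "IV = invf f x y"
  define Gx where "Gx = (\<Sum>(i,j)\<in>Poly_Mapping.keys f. Poly_Mapping.lookup f (i,j) * of_nat i * x ^ (i - 1) * y ^ (j - b))"
  define Gyp where "Gyp = (\<Sum>(i,j)\<in>Poly_Mapping.keys f. Poly_Mapping.lookup f (i,j) * of_nat (j - b) * x ^ i * y ^ (j - b))"
  let ?c = "\<lambda>i j. Poly_Mapping.lookup f (i,j)"
  have "wact (Qop f b) (invf f) x y = (\<Sum>(i,j)\<in>Poly_Mapping.keys f.
       (y * (?c i j * of_nat i * x ^ (i - 1) * y ^ (j - b))) * PY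
     + (- (?c i j * of_nat (j - b) * x ^ i * y ^ (j - b))) * PX
     + (of_nat b * (?c i j * of_nat i * x ^ (i - 1) * y ^ (j - b))) * IV)"
    unfolding Qop_def wact_sum
    by (rule sum.cong[OF refl]) (auto simp: wact_add wact_single PX_def PY_def IV_def ac_simps split: prod.splits)
  also have "\<dots> = y * Gx * PY - Gyp * PX + of_nat b * Gx * IV"
    unfolding Gx_def Gyp_def sum_distrib_left sum_distrib_right
    unfolding sum_subtractf[symmetric] sum.distrib[symmetric]
    by (rule sum.cong[OF refl]) (auto simp: algebra_simps split: prod.splits)
  finally have w: "wact (Qop f b) (invf f) x y = y * Gx * PY - Gyp * PX + of_nat b * Gx * IV" .
  have k1: "y * (?c i j * of_nat j * x ^ i * y ^ (j - 1)) =
       of_nat b * (?c i j * x ^ i * y ^ j) + y ^ b * (?c i j * of_nat (j - b) * x ^ i * y ^ (j - b))"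
    if ij: "(i,j) \<in> Poly_Mapping.keys f" for i j
  proof -
    have bj: "b \<le> j" using bmin[OF ij] .
    have "y ^ b * y ^ (j - b) = y ^ j" using bj by (simp add: power_add[symmetric])
    moreover have "of_nat j = (of_nat b + of_nat (j - b) :: complex)" using bj by (simp add: of_nat_diff)
    ultimately show ?thesis
      unfolding y_pow_pred by (simp add: algebra_simps)
  qed
  have i1: "y * fyf f x y = of_nat b * F + y ^ b * Gyp"
    unfolding F_def fyf_def Gyp_def bipoly_eval_def sum_distrib_left sum.distrib[symmetric]
    by (rule sum_pair_cong2) (simp only: prod.case k1)
  have k2: "?c i j * of_nat i * x ^ (i - 1) * y ^ j = y ^ b * (?c i j * of_nat i * x ^ (i - 1) * y ^ (j - b))"
    if ij: "(i,j) \<in> Poly_Mapping.keys f" for i j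
  proof -
    have "y ^ b * y ^ (j - b) = y ^ j" using bmin[OF ij] by (simp add: power_add[symmetric])
    thus ?thesis by (metis mult.assoc mult.commute)
  qed
  have i2: "fxf f x y = y ^ b * Gx"
    unfolding fxf_def Gx_def sum_distrib_left
    by (rule sum_pair_cong2) (simp only: prod.case k2)
  have e: "PX = - fxf f x y / F^2" "PY = - fyf f x y / F^2" "IV = 1 / F"
    using pdx_inv[OF nz] pdy_inv[OF nz] by (simp_all add: PX_def PY_def IV_def F_def invf_def)
  have Fnz: "F \<noteq> 0" using nz by (simp add: F_def)
  have "y * Gx * PY - Gyp * PX + of_nat b * Gx * IV = (- Gx * (y * fyf f x y) + Gyp * fxf f x y + of_nat b * Gx * F) / F^2"
    unfolding e using Fnz by (simp add: field_simps power2_eq_square)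
  also have "\<dots> = 0" unfolding i1 i2 by (simp add: algebra_simps)
  finally show "wact (Qop f b) (invf f) x y = 0" using w by simp
qed

lemma Dy_Ann:
  assumes "\<And>i j. (i,j) \<in> Poly_Mapping.keys f \<Longrightarrow> j = 0"
  shows "Poly_Mapping.single (0,0,0,1) 1 \<in> Ann_inv f"
  unfolding Ann_invf
proof (intro CollectI allI impI)
  fix x y assume nz: "bipoly_eval f x y \<noteq> 0"
  have "fyf f x y = 0" unfolding fyf_def by (rule sum.neutral) (use assms in auto)
  thus "wact (Poly_Mapping.single (0,0,0,1) 1) (invf f) x y = 0"
    by (simp add: wact_single pdy_inv[OF nz])
qed

lemma Dx_Ann:
  assumes "\<And>i j. (i,j) \<in> Poly_Mapping.keys f \<Longrightarrow> i = 0"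
  shows "Poly_Mapping.single (0,0,1,0) 1 \<in> Ann_inv f"
  unfolding Ann_invf
proof (intro CollectI allI impI)
  fix x y assume nz: "bipoly_eval f x y \<noteq> 0"
  have "fxf f x y = 0" unfolding fxf_def by (rule sum.neutral) (use assms in auto)
  thus "wact (Poly_Mapping.single (0,0,1,0) 1) (invf f) x y = 0"
    by (simp add: wact_single pdx_inv[OF nz])
qed



lemma prod_shift_rev: "(\<Prod>t\<in>{1..n}. x + of_nat t) = (\<Prod>t\<in>{m..<m+n}. x + of_nat (m + n - t) :: complex)"
proof (induction n arbitrary: m)
  case 0 thus ?case by simp
next
  case (Suc n)
  have "{m..<m + Suc n} = insert m {Suc m..<Suc m + n}" by auto
  hence "(\<Prod>t\<in>{m..<m + Suc n}. x + of_nat (m + Suc n - t)) = (x + of_nat (Suc n)) * (\<Prod>t\<in>{Suc m..<Suc m + n}. x + of_nat (Suc m + n - t))"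
    by (simp add: prod.insert)
  also have "\<dots> = (x + of_nat (Suc n)) * (\<Prod>t\<in>{1..n}. x + of_nat t)" using Suc[of "Suc m"] by simp
  also have "\<dots> = (\<Prod>t\<in>{1..Suc n}. x + of_nat t)" by (simp add: prod.nat_ivl_Suc' mult.commute)
  finally show ?case by (rule sym)
qed

lemma ff_prod: "of_nat (ff (j + n) n) = (\<Prod>t\<in>{1..n}. of_nat j + of_nat t :: complex)"
proof (induction n)
  case 0 thus ?case by (simp add: ff_def)
next
  case (Suc n)
  have a: "ff (j + Suc n) (Suc n) * fact j = fact (j + Suc n)" using ff_mult_fact[of "Suc n" "j + Suc n"] by simp
  have b: "ff (j + n) n * fact j = fact (j + n)" using ff_mult_fact[of n "j + n"] by simp
  have c: "fact (j + Suc n) = (j + Suc n) * fact (j + n)" by simp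
  have "ff (j + Suc n) (Suc n) * fact j = (j + Suc n) * (ff (j + n) n * fact j)"
    unfolding a b c ..
  hence "ff (j + Suc n) (Suc n) = (j + Suc n) * ff (j + n) n" by (metis mult.assoc mult_right_cancel fact_nonzero)
  thus ?case using Suc by (simp add: prod.nat_ivl_Suc' algebra_simps)
qed

lemma init_sum_split:
  assumes fin: "finite K" and k0: "k0 \<in> K" and nz: "T k0 \<noteq> 0"
    and w0: "\<And>m. m \<in> Poly_Mapping.keys (T k0) \<Longrightarrow> wweight \<omega> m = w"
    and w1: "\<And>k m. k \<in> K \<Longrightarrow> k \<noteq> k0 \<Longrightarrow> m \<in> Poly_Mapping.keys (T k) \<Longrightarrow> wweight \<omega> m < w"
  shows "initial_form \<omega> (\<Sum>k\<in>K. T k) = T k0"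
proof -
  have e: "(\<Sum>k\<in>K. T k) = T k0 + (\<Sum>k\<in>K - {k0}. T k)" using sum.remove[OF fin k0] .
  have w1': "wweight \<omega> m < w" if m: "m \<in> Poly_Mapping.keys (\<Sum>k\<in>K - {k0}. T k)" for m
  proof -
    have "m \<in> (\<Union>k\<in>K - {k0}. Poly_Mapping.keys (T k))" using keys_sum m by (rule subsetD)
    then obtain k where k: "k \<in> K - {k0}" "m \<in> Poly_Mapping.keys (T k)" by (rule UN_E)
    show ?thesis using w1[of k m] k by simp
  qed
  show ?thesis by (rule init_split[OF e nz w0 w1'])
qed

lemma mem_keys_single: "m \<in> Poly_Mapping.keys (Poly_Mapping.single p u) \<longleftrightarrow> m = p \<and> u \<noteq> 0"
  by simp

lemma keys2:
  assumes "m \<in> Poly_Mapping.keys (Poly_Mapping.single p u + Poly_Mapping.single q v)"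
  shows "(m = p \<and> u \<noteq> 0) \<or> (m = q \<and> v \<noteq> 0)"
proof -
  have "m \<in> Poly_Mapping.keys (Poly_Mapping.single p u) \<union> Poly_Mapping.keys (Poly_Mapping.single q v)"
    using keys_add assms by (rule subsetD)
  thus ?thesis unfolding Un_iff mem_keys_single .
qed

lemma keys3:
  assumes "m \<in> Poly_Mapping.keys (Poly_Mapping.single p u + Poly_Mapping.single q v + Poly_Mapping.single r z)"
  shows "(m = p \<and> u \<noteq> 0) \<or> (m = q \<and> v \<noteq> 0) \<or> (m = r \<and> z \<noteq> 0)"
proof -
  have "m \<in> Poly_Mapping.keys (Poly_Mapping.single p u + Poly_Mapping.single q v) \<union> Poly_Mapping.keys (Poly_Mapping.single r z)"
    using keys_add assms by (rule subsetD)
  hence "m \<in> Poly_Mapping.keys (Poly_Mapping.single p u + Poly_Mapping.single q v) \<or> (m = r \<and> z \<noteq> 0)"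
    unfolding Un_iff mem_keys_single .
  thus ?thesis using keys2[of m p u q v] by argo
qed



definition Lset :: "real \<times> real \<Rightarrow> bipoly \<Rightarrow> weyl set" where
  "Lset \<omega> f = initial_ideal \<omega> (Ann_inv f)"

definition cR :: "real \<times> real \<Rightarrow> nat \<Rightarrow> nat \<Rightarrow> complex" where
  "cR \<omega> d t = complex_of_real (real t * fst \<omega> + real (d - t) * snd \<omega>)"

definition Pr :: "nat set \<Rightarrow> nat \<Rightarrow> complex" where
  "Pr S i = (\<Prod>t\<in>S. of_nat i + of_nat t)"

lemma real_Pr: "realizable (\<lambda>i j. Pr S i)"
proof -
  have "realizable (\<lambda>i j. \<Prod>t\<in>S. linf 1 0 (of_nat t) i j)" by (rule real_prod, rule real_lin)
  thus ?thesis by (rule real_cong) (simp add: Pr_def linf_def)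
qed

lemma L_left_ideal: "Lset \<omega> f = left_ideal_gen (initial_form \<omega> ` Ann_inv f)"
  by (simp add: Lset_def initial_ideal_def)

lemma E_in:
  assumes "homogeneous_of_degree f d"
  shows "Eop d \<in> Lset \<omega> f"
proof -
  have "initial_form \<omega> (Eop d) = Eop d"
  proof (rule init_homog[where w = 0])
    fix m assume "m \<in> Poly_Mapping.keys (Eop d)"
    hence "m = (1,0,1,0) \<or> m = (0,1,0,1) \<or> m = (0,0,0,0)" unfolding Eop_def by (metis keys3)
    thus "wweight \<omega> m = 0" by (elim disjE) (simp_all add: wweight_def)
  qed
  thus ?thesis using init_mem[OF Eop_Ann[OF assms], of \<omega>] by (simp add: Lset_def)
qed

lemma redX:
  assumes "t \<le> d"
  shows "redf (of_nat d) (om1 \<omega>) (om2 \<omega>) (cR \<omega> d t) i = (om1 \<omega> - om2 \<omega>) * (of_nat i + of_nat t)"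
  using assms by (simp add: redf_def cR_def om1_def om2_def of_nat_diff algebra_simps)

lemma prod_redX:
  "(\<Prod>t\<in>{0..d}. redf (of_nat d) (om1 \<omega>) (om2 \<omega>) (cR \<omega> d t) i) = (om1 \<omega> - om2 \<omega>) ^ (d + 1) * Pr {0..d} i"
proof -
  have "(\<Prod>t\<in>{0..d}. redf (of_nat d) (om1 \<omega>) (om2 \<omega>) (cR \<omega> d t) i) = (\<Prod>t\<in>{0..d}. (om1 \<omega> - om2 \<omega>) * (of_nat i + of_nat t))"
    by (rule prod.cong) (auto simp: redX)
  also have "\<dots> = (om1 \<omega> - om2 \<omega>) ^ (d + 1) * Pr {0..d} i"
    by (simp add: prod.distrib Pr_def)
  finally show ?thesis .
qed

lemma Pr_split1:
  assumes "a \<le> d"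
  shows "Pr {0..d} i = Pr {0..<a} i * Pr {a..<d} i * (of_nat i + of_nat d)"
proof -
  have "Pr {0..d} i = Pr {0..<d} i * (of_nat i + of_nat d)"
    unfolding Pr_def by (simp add: atLeastLessThanSuc_atLeastAtMost[symmetric] prod.atLeastLessThan_Suc)
  moreover have "Pr {0..<d} i = Pr {0..<a} i * Pr {a..<d} i"
    unfolding Pr_def using prod.atLeastLessThan_concat[of 0 a d "\<lambda>t. of_nat i + of_nat t :: complex"] assms by simp
  ultimately show ?thesis by simp
qed

lemma Pr_split2:
  assumes "a < d"
  shows "Pr {a..<d} i = (of_nat i + of_nat a) * Pr {Suc a..<d} i"
proof -
  have "{a..<d} = insert a {Suc a..<d}" using assms by auto
  thus ?thesis unfolding Pr_def by simp
qed

lemma Pr_split3: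
  assumes "1 \<le> a" "a \<le> d"
  shows "Pr {0..d} i = of_nat i * Pr {1..a} i * Pr {Suc a..d} i"
proof -
  have "{0..d} = insert 0 {1..d}" by auto
  hence "Pr {0..d} i = of_nat i * Pr {1..d} i" unfolding Pr_def by simp
  moreover have "Pr {1..d} i = Pr {1..a} i * Pr {Suc a..d} i"
  proof -
    have "{1..d} = {1..a} \<union> {Suc a..d}" using assms by auto
    moreover have "{1..a} \<inter> {Suc a..d} = {}" by auto
    ultimately show ?thesis unfolding Pr_def by (simp add: prod.union_disjoint)
  qed
  ultimately show ?thesis by simp
qed

lemma Pr_split4:
  assumes "1 \<le> a"
  shows "Pr {1..a} i = Pr {1..a - 1} i * (of_nat i + of_nat a)"
proof -
  obtain n where n: "a = Suc n" using assms by (cases a) auto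
  have "{1..Suc n} = insert (Suc n) {1..n}" by auto
  thus ?thesis unfolding Pr_def n by (simp add: mult.commute)
qed



lemma act_tx: "act (Poly_Mapping.single (1,n,1,0) u) (Poly_Mapping.single (i,j) 1) = Poly_Mapping.single (i, j+n) (u * of_nat i)"
  by (cases i) (simp_all add: act_single_single ffac_ff ff_def)

lemma act_cx: "act (Poly_Mapping.single (0,n,0,0) v) (Poly_Mapping.single (i,j) 1) = Poly_Mapping.single (i, j+n) v"
  by (simp add: act_single_single ffac_ff ff_def)

lemma act_dyn: "act (Poly_Mapping.single (0,0,0,n) 1) (Poly_Mapping.single (i,j+n) w) = Poly_Mapping.single (i, j) (w * of_nat (ff (j+n) n))"
  by (simp add: act_single_single ffac_ff ff_def)

lemma diag_Z1: "diag (wmul (Poly_Mapping.single (0,0,0,n) 1) (Poly_Mapping.single (1,n,1,0) u + Poly_Mapping.single (0,n,0,0) v))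
   (\<lambda>i j. (u * of_nat i + v) * of_nat (ff (j+n) n))"
  unfolding diag_def
proof (intro allI)
  fix i j
  show "act (wmul (Poly_Mapping.single (0,0,0,n) 1) (Poly_Mapping.single (1,n,1,0) u + Poly_Mapping.single (0,n,0,0) v)) (Poly_Mapping.single (i,j) 1)
    = Poly_Mapping.single (i,j) ((u * of_nat i + v) * of_nat (ff (j+n) n))"
    unfolding act_wmul act_add_left act_tx act_cx single_add[symmetric] act_dyn ..
qed

lemma act_ty: "act (Poly_Mapping.single (n,1,0,1) u) (Poly_Mapping.single (i,j) 1) = Poly_Mapping.single (i+n, j) (u * of_nat j)"
  by (cases j) (simp_all add: act_single_single ffac_ff ff_def)

lemma act_cy: "act (Poly_Mapping.single (n,0,0,0) v) (Poly_Mapping.single (i,j) 1) = Poly_Mapping.single (i+n, j) v"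
  by (simp add: act_single_single ffac_ff ff_def)

lemma act_dxn: "act (Poly_Mapping.single (0,0,n,0) 1) (Poly_Mapping.single (i+n,j) w) = Poly_Mapping.single (i, j) (w * of_nat (ff (i+n) n))"
  by (simp add: act_single_single ffac_ff ff_def)

lemma diag_Z2: "diag (wmul (Poly_Mapping.single (0,0,n,0) 1) (Poly_Mapping.single (n,1,0,1) u + Poly_Mapping.single (n,0,0,0) v))
   (\<lambda>i j. (u * of_nat j + v) * of_nat (ff (i+n) n))"
  unfolding diag_def
proof (intro allI)
  fix i j
  show "act (wmul (Poly_Mapping.single (0,0,n,0) 1) (Poly_Mapping.single (n,1,0,1) u + Poly_Mapping.single (n,0,0,0) v)) (Poly_Mapping.single (i,j) 1)
    = Poly_Mapping.single (i,j) ((u * of_nat j + v) * of_nat (ff (i+n) n))"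
    unfolding act_wmul act_add_left act_ty act_cy single_add[symmetric] act_dxn ..
qed

lemma prod_neg: "(\<Prod>t\<in>S. - (g t :: complex)) = (-1) ^ card S * (\<Prod>t\<in>S. g t)"
proof -
  have "(\<Prod>t\<in>S. - g t) = (\<Prod>t\<in>S. (-1) * g t)" by simp
  also have "\<dots> = (-1) ^ card S * (\<Prod>t\<in>S. g t)" unfolding prod.distrib prod_constant ..
  finally show ?thesis .
qed


lemma hom_sum: "homogeneous_of_degree f d \<Longrightarrow> (i,j) \<in> Poly_Mapping.keys f \<Longrightarrow> i + j = d"
  unfolding homogeneous_of_degree_def by blast

lemma Pop_init:
  assumes hom: "homogeneous_of_degree f d" and ab: "(a,b) \<in> Poly_Mapping.keys f"
    and amin: "\<And>i j. (i,j) \<in> Poly_Mapping.keys f \<Longrightarrow> a \<le> i"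
    and b1: "1 \<le> b" and w: "fst \<omega> > snd \<omega>"
  shows "initial_form \<omega> (Pop f a) = Poly_Mapping.single (1, b - 1, 1, 0) (Poly_Mapping.lookup f (a,b) * of_nat b)
     + Poly_Mapping.single (0, b - 1, 0, 0) (of_nat a * Poly_Mapping.lookup f (a,b) * of_nat b)"
proof -
  define T :: "nat \<times> nat \<Rightarrow> weyl" where "T = (\<lambda>k. case k of (i,j) \<Rightarrow>
      Poly_Mapping.single (i - a + 1, j - 1, 1, 0) (Poly_Mapping.lookup f (i,j) * of_nat j)
    + Poly_Mapping.single (i - a, j, 0, 1) (- (Poly_Mapping.lookup f (i,j) * of_nat (i - a)))
    + Poly_Mapping.single (i - a, j - 1, 0, 0) (of_nat a * Poly_Mapping.lookup f (i,j) * of_nat j))"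
  let ?c = "Poly_Mapping.lookup f (a,b)"
  have c: "?c \<noteq> 0" using ab by (simp add: in_keys_iff)
  have abd: "a + b = d" using hom_sum[OF hom ab] .
  have Pe: "Pop f a = (\<Sum>k\<in>Poly_Mapping.keys f. T k)" unfolding Pop_def T_def ..
  have Tk0: "T (a,b) = Poly_Mapping.single (1, b - 1, 1, 0) (?c * of_nat b)
     + Poly_Mapping.single (0, b - 1, 0, 0) (of_nat a * ?c * of_nat b)"
    by (simp add: T_def)
  define w0 where "w0 = - snd \<omega> * (real b - 1)"
  have "initial_form \<omega> (\<Sum>k\<in>Poly_Mapping.keys f. T k) = T (a,b)"
  proof (rule init_sum_split[OF finite_keys ab])
    have "Poly_Mapping.lookup (T (a,b)) (1, b - 1, 1, 0) = ?c * of_nat b"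
      unfolding Tk0 by (simp add: lookup_add lookup_single)
    thus "T (a,b) \<noteq> 0" using c b1 by auto
  next
    fix m assume "m \<in> Poly_Mapping.keys (T (a,b))"
    hence "m = (1, b - 1, 1, 0) \<or> m = (0, b - 1, 0, 0)" unfolding Tk0 by (metis keys2)
    thus "wweight \<omega> m = w0" using b1 by (elim disjE) (simp_all add: wweight_def w0_def of_nat_diff algebra_simps)
  next
    fix k m assume k: "k \<in> Poly_Mapping.keys f" "k \<noteq> (a,b)" and m: "m \<in> Poly_Mapping.keys (T k)"
    obtain i j where kij: "k = (i,j)" by (cases k) auto
    have ijd: "i + j = d" using hom_sum[OF hom] k kij by simp
    have ai: "a < i" using amin[of i j] k kij ijd abd by fastforce
    have ri: "real j = real d - real i" "real b = real d - real a" using ijd abd by linarith+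
    have pos: "(fst \<omega> - snd \<omega>) * (real i - real a) > 0" using w ai by simp
    have m3: "(m = (i - a + 1, j - 1, 1, 0) \<and> Poly_Mapping.lookup f (i,j) * of_nat j \<noteq> 0)
        \<or> (m = (i - a, j, 0, 1)) \<or> (m = (i - a, j - 1, 0, 0) \<and> of_nat a * Poly_Mapping.lookup f (i,j) * of_nat j \<noteq> 0)"
      using keys3[of m] m unfolding kij T_def prod.case by blast
    have "wweight \<omega> m = w0 - (fst \<omega> - snd \<omega>) * (real i - real a)"
    proof -
      { assume "m = (i - a + 1, j - 1, 1, 0)" "Poly_Mapping.lookup f (i,j) * of_nat j \<noteq> 0"
        hence "1 \<le> j" "m = (i - a + 1, j - 1, 1, 0)" by auto
        hence ?thesis using ai unfolding w0_def by (simp add: wweight_def of_nat_diff ri algebra_simps) }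
      moreover
      { assume "m = (i - a, j, 0, 1)"
        hence ?thesis using ai unfolding w0_def by (simp add: wweight_def of_nat_diff ri algebra_simps) }
      moreover
      { assume "m = (i - a, j - 1, 0, 0)" "of_nat a * Poly_Mapping.lookup f (i,j) * of_nat j \<noteq> 0"
        hence "1 \<le> j" "m = (i - a, j - 1, 0, 0)" by auto
        hence ?thesis using ai unfolding w0_def by (simp add: wweight_def of_nat_diff ri algebra_simps) }
      ultimately show ?thesis using m3 by blast
    qed
    thus "wweight \<omega> m < w0" using pos by simp
  qed
  thus ?thesis using Pe Tk0 by simp
qed


lemma Qop_init:
  assumes hom: "homogeneous_of_degree f d" and ab: "(a,b) \<in> Poly_Mapping.keys f"
    and bmin: "\<And>i j. (i,j) \<in> Poly_Mapping.keys f \<Longrightarrow> b \<le> j"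
    and a1: "1 \<le> a" and w: "fst \<omega> < snd \<omega>"
  shows "initial_form \<omega> (Qop f b) = Poly_Mapping.single (a - 1, 1, 0, 1) (Poly_Mapping.lookup f (a,b) * of_nat a)
     + Poly_Mapping.single (a - 1, 0, 0, 0) (of_nat b * Poly_Mapping.lookup f (a,b) * of_nat a)"
proof -
  define T :: "nat \<times> nat \<Rightarrow> weyl" where "T = (\<lambda>k. case k of (i,j) \<Rightarrow>
      Poly_Mapping.single (i - 1, j - b + 1, 0, 1) (Poly_Mapping.lookup f (i,j) * of_nat i)
    + Poly_Mapping.single (i, j - b, 1, 0) (- (Poly_Mapping.lookup f (i,j) * of_nat (j - b)))
    + Poly_Mapping.single (i - 1, j - b, 0, 0) (of_nat b * Poly_Mapping.lookup f (i,j) * of_nat i))"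
  let ?c = "Poly_Mapping.lookup f (a,b)"
  have c: "?c \<noteq> 0" using ab by (simp add: in_keys_iff)
  have abd: "a + b = d" using hom_sum[OF hom ab] .
  have Pe: "Qop f b = (\<Sum>k\<in>Poly_Mapping.keys f. T k)" unfolding Qop_def T_def ..
  have Tk0: "T (a,b) = Poly_Mapping.single (a - 1, 1, 0, 1) (?c * of_nat a)
     + Poly_Mapping.single (a - 1, 0, 0, 0) (of_nat b * ?c * of_nat a)"
    by (simp add: T_def)
  define w0 where "w0 = - fst \<omega> * (real a - 1)"
  have "initial_form \<omega> (\<Sum>k\<in>Poly_Mapping.keys f. T k) = T (a,b)"
  proof (rule init_sum_split[OF finite_keys ab])
    have "Poly_Mapping.lookup (T (a,b)) (a - 1, 1, 0, 1) = ?c * of_nat a"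
      unfolding Tk0 by (simp add: lookup_add lookup_single)
    thus "T (a,b) \<noteq> 0" using c a1 by auto
  next
    fix m assume "m \<in> Poly_Mapping.keys (T (a,b))"
    hence "m = (a - 1, 1, 0, 1) \<or> m = (a - 1, 0, 0, 0)" unfolding Tk0 by (metis keys2)
    thus "wweight \<omega> m = w0" using a1 by (elim disjE) (simp_all add: wweight_def w0_def of_nat_diff algebra_simps)
  next
    fix k m assume k: "k \<in> Poly_Mapping.keys f" "k \<noteq> (a,b)" and m: "m \<in> Poly_Mapping.keys (T k)"
    obtain i j where kij: "k = (i,j)" by (cases k) auto
    have ijd: "i + j = d" using hom_sum[OF hom] k kij by simp
    have bj: "b < j" using bmin[of i j] k kij ijd abd by fastforce
    have ri: "real i = real d - real j" "real a = real d - real b" using ijd abd by linarith+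
    have pos: "(snd \<omega> - fst \<omega>) * (real j - real b) > 0" using w bj by simp
    have m3: "(m = (i - 1, j - b + 1, 0, 1) \<and> Poly_Mapping.lookup f (i,j) * of_nat i \<noteq> 0)
        \<or> (m = (i, j - b, 1, 0)) \<or> (m = (i - 1, j - b, 0, 0) \<and> of_nat b * Poly_Mapping.lookup f (i,j) * of_nat i \<noteq> 0)"
      using keys3[of m] m unfolding kij T_def prod.case by blast
    have "wweight \<omega> m = w0 - (snd \<omega> - fst \<omega>) * (real j - real b)"
    proof -
      { assume "m = (i - 1, j - b + 1, 0, 1)" "Poly_Mapping.lookup f (i,j) * of_nat i \<noteq> 0"
        hence "1 \<le> i" "m = (i - 1, j - b + 1, 0, 1)" by auto
        hence ?thesis using bj unfolding w0_def by (simp add: wweight_def of_nat_diff ri algebra_simps) }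
      moreover
      { assume "m = (i, j - b, 1, 0)"
        hence ?thesis using bj unfolding w0_def by (simp add: wweight_def of_nat_diff ri algebra_simps) }
      moreover
      { assume "m = (i - 1, j - b, 0, 0)" "of_nat b * Poly_Mapping.lookup f (i,j) * of_nat i \<noteq> 0"
        hence "1 \<le> i" "m = (i - 1, j - b, 0, 0)" by auto
        hence ?thesis using bj unfolding w0_def by (simp add: wweight_def of_nat_diff ri algebra_simps) }
      ultimately show ?thesis using m3 by blast
    qed
    thus "wweight \<omega> m < w0" using pos by simp
  qed
  thus ?thesis using Pe Tk0 by simp
qed



lemma caseB1a:
  assumes hom: "homogeneous_of_degree f d" and ab: "(a,b) \<in> Poly_Mapping.keys f"
    and amin: "\<And>i j. (i,j) \<in> Poly_Mapping.keys f \<Longrightarrow> a \<le> i"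
    and b1: "1 \<le> b" and w: "fst \<omega> > snd \<omega>"
    and X: "diag X (\<lambda>i j. \<Prod>t\<in>{0..d}. linf (om1 \<omega>) (om2 \<omega>) (cR \<omega> d t) i j)"
  shows "X \<in> Lset \<omega> f"
proof -
  let ?c = "Poly_Mapping.lookup f (a,b)"
  have c: "?c \<noteq> 0" using ab by (simp add: in_keys_iff)
  have abd: "a + b = d" using hom_sum[OF hom ab] .
  define n where "n = b - 1"
  have dn: "Suc a + n = d" "a < d" using abd b1 by (auto simp: n_def)
  define u where "u = ?c * of_nat b"
  define v where "v = of_nat a * ?c * of_nat b"
  have unz: "u \<noteq> 0" using c b1 by (simp add: u_def)
  define P0 :: weyl where "P0 = Poly_Mapping.single (1, n, 1, 0) u + Poly_Mapping.single (0, n, 0, 0) v"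
  have PA: "Pop f a \<in> Ann_inv f" by (rule Pop_Ann) (rule amin)
  have PI: "initial_form \<omega> (Pop f a) = P0"
    unfolding P0_def u_def v_def n_def by (rule Pop_init[OF hom ab _ b1 w]) (rule amin)
  have P0L: "P0 \<in> Lset \<omega> f"
    using init_mem[OF PA, of \<omega>] PI by (simp add: Lset_def)
  define Z :: weyl where "Z = wmul (Poly_Mapping.single (0,0,0,n) 1) P0"
  have ZL: "Z \<in> Lset \<omega> f" unfolding Z_def L_left_ideal by (rule lig_mul, fold L_left_ideal, rule P0L)
  define \<alpha> :: "nat \<Rightarrow> complex" where "\<alpha> = (\<lambda>t. if t = a then u else 0)"
  define \<beta> :: "nat \<Rightarrow> complex" where "\<beta> = (\<lambda>t. if t = a then 0 else 1)"
  define \<gamma> :: "nat \<Rightarrow> complex" where "\<gamma> = (\<lambda>t. if t = a then v else of_nat (d - t))"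
  have ins: "{a..<d} = insert a {Suc a..<d}" using dn by auto
  have hZ: "diag Z (\<lambda>i j. \<Prod>t\<in>{a..<d}. linf (\<alpha> t) (\<beta> t) (\<gamma> t) i j)"
  proof (rule diag_cong[OF diag_Z1[of n u v, folded P0_def Z_def]])
    fix i j
    have "(\<Prod>t\<in>{Suc a..<d}. linf (\<alpha> t) (\<beta> t) (\<gamma> t) i j) = (\<Prod>t\<in>{Suc a..<Suc a + n}. of_nat j + of_nat (Suc a + n - t))"
      unfolding dn(1)[symmetric] by (rule prod.cong) (auto simp: \<alpha>_def \<beta>_def \<gamma>_def linf_def dn(1)[symmetric] of_nat_diff)
    also have "\<dots> = of_nat (ff (j + n) n)" using prod_shift_rev[of "of_nat j" n "Suc a"] ff_prod[of j n] by simp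
    finally have e: "(\<Prod>t\<in>{Suc a..<d}. linf (\<alpha> t) (\<beta> t) (\<gamma> t) i j) = of_nat (ff (j + n) n)" .
    show "(u * of_nat i + v) * of_nat (ff (j + n) n) = (\<Prod>t\<in>{a..<d}. linf (\<alpha> t) (\<beta> t) (\<gamma> t) i j)"
      unfolding ins using e by (simp add: \<alpha>_def \<beta>_def \<gamma>_def linf_def)
  qed
  define \<delta> where "\<delta> = om1 \<omega> - om2 \<omega>"
  have rZ: "(\<Prod>t\<in>{a..<d}. redf (of_nat d) (\<alpha> t) (\<beta> t) (\<gamma> t) i) = u * (-1) ^ n * Pr {a..<d} i" for i
  proof -
    have "(\<Prod>t\<in>{Suc a..<d}. redf (of_nat d) (\<alpha> t) (\<beta> t) (\<gamma> t) i) = (\<Prod>t\<in>{Suc a..<d}. - (of_nat i + of_nat t))"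
      by (rule prod.cong) (auto simp: \<alpha>_def \<beta>_def \<gamma>_def redf_def of_nat_diff)
    also have "\<dots> = (-1) ^ n * Pr {Suc a..<d} i"
    proof -
      have "card {Suc a..<d} = n" using dn by simp
      thus ?thesis unfolding prod_neg Pr_def by simp
    qed
    finally have e: "(\<Prod>t\<in>{Suc a..<d}. redf (of_nat d) (\<alpha> t) (\<beta> t) (\<gamma> t) i) = (-1) ^ n * Pr {Suc a..<d} i" .
    have h: "redf (of_nat d) (\<alpha> a) (\<beta> a) (\<gamma> a) i = u * (of_nat i + of_nat a)"
      by (simp add: \<alpha>_def \<beta>_def \<gamma>_def redf_def u_def v_def algebra_simps)
    have p: "(\<Prod>t\<in>{a..<d}. redf (of_nat d) (\<alpha> t) (\<beta> t) (\<gamma> t) i) =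
       redf (of_nat d) (\<alpha> a) (\<beta> a) (\<gamma> a) i * (\<Prod>t\<in>{Suc a..<d}. redf (of_nat d) (\<alpha> t) (\<beta> t) (\<gamma> t) i)"
      unfolding ins by simp
    show ?thesis unfolding p h e Pr_split2[OF dn(2), of i] by (simp add: ac_simps)
  qed
  define wf where "wf = (\<lambda>(i::nat) (j::nat). \<delta> ^ (d + 1) / (u * (-1) ^ n) * Pr {0..<a} i * (of_nat i + of_nat d))"
  have wr: "realizable wf"
  proof -
    have "realizable (\<lambda>i j. (\<delta> ^ (d + 1) / (u * (-1) ^ n)) * Pr {0..<a} i * linf 1 0 (of_nat d) i j)"
      by (rule real_mult[OF real_mult[OF real_const real_Pr] real_lin])
    thus ?thesis by (rule real_cong) (simp add: wf_def linf_def)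
  qed
  show ?thesis
  proof (rule combine[OF L_left_ideal E_in[OF hom] diag_Eop ZL hZ _ X _ wr])
    fix i j
    show "(\<Prod>t\<in>{0..d}. redf (of_nat d) (om1 \<omega>) (om2 \<omega>) (cR \<omega> d t) i) = wf i j * (\<Prod>t\<in>{a..<d}. redf (of_nat d) (\<alpha> t) (\<beta> t) (\<gamma> t) i)"
      unfolding prod_redX rZ Pr_split1[OF less_imp_le[OF dn(2)]] using unz
      by (simp add: wf_def \<delta>_def field_simps)
  qed simp_all
qed


lemma caseB2a:
  assumes hom: "homogeneous_of_degree f d" and ab: "(a,b) \<in> Poly_Mapping.keys f"
    and bmin: "\<And>i j. (i,j) \<in> Poly_Mapping.keys f \<Longrightarrow> b \<le> j"
    and a1: "1 \<le> a" and w: "fst \<omega> < snd \<omega>"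
    and X: "diag X (\<lambda>i j. \<Prod>t\<in>{0..d}. linf (om1 \<omega>) (om2 \<omega>) (cR \<omega> d t) i j)"
  shows "X \<in> Lset \<omega> f"
proof -
  let ?c = "Poly_Mapping.lookup f (a,b)"
  have c: "?c \<noteq> 0" using ab by (simp add: in_keys_iff)
  have abd: "a + b = d" using hom_sum[OF hom ab] .
  define n where "n = a - 1"
  have dn: "Suc b + n = d" "b < d" "a \<le> d" using abd a1 by (auto simp: n_def)
  define u where "u = ?c * of_nat a"
  define v where "v = of_nat b * ?c * of_nat a"
  have unz: "u \<noteq> 0" using c a1 by (simp add: u_def)
  define Q0 :: weyl where "Q0 = Poly_Mapping.single (n, 1, 0, 1) u + Poly_Mapping.single (n, 0, 0, 0) v"
  have QA: "Qop f b \<in> Ann_inv f" by (rule Qop_Ann) (rule bmin)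
  have QI: "initial_form \<omega> (Qop f b) = Q0"
    unfolding Q0_def u_def v_def n_def by (rule Qop_init[OF hom ab _ a1 w]) (rule bmin)
  have Q0L: "Q0 \<in> Lset \<omega> f"
    using init_mem[OF QA, of \<omega>] QI by (simp add: Lset_def)
  define Z :: weyl where "Z = wmul (Poly_Mapping.single (0,0,n,0) 1) Q0"
  have ZL: "Z \<in> Lset \<omega> f" unfolding Z_def L_left_ideal by (rule lig_mul, fold L_left_ideal, rule Q0L)
  define \<alpha> :: "nat \<Rightarrow> complex" where "\<alpha> = (\<lambda>t. if t = b then 0 else 1)"
  define \<beta> :: "nat \<Rightarrow> complex" where "\<beta> = (\<lambda>t. if t = b then u else 0)"
  define \<gamma> :: "nat \<Rightarrow> complex" where "\<gamma> = (\<lambda>t. if t = b then v else of_nat (d - t))"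
  have ins: "{b..<d} = insert b {Suc b..<d}" using dn by auto
  have hZ: "diag Z (\<lambda>i j. \<Prod>t\<in>{b..<d}. linf (\<alpha> t) (\<beta> t) (\<gamma> t) i j)"
  proof (rule diag_cong[OF diag_Z2[of n u v, folded Q0_def Z_def]])
    fix i j
    have "(\<Prod>t\<in>{Suc b..<d}. linf (\<alpha> t) (\<beta> t) (\<gamma> t) i j) = (\<Prod>t\<in>{Suc b..<Suc b + n}. of_nat i + of_nat (Suc b + n - t))"
      unfolding dn(1)[symmetric] by (rule prod.cong) (auto simp: \<alpha>_def \<beta>_def \<gamma>_def linf_def dn(1)[symmetric] of_nat_diff)
    also have "\<dots> = of_nat (ff (i + n) n)" using prod_shift_rev[of "of_nat i" n "Suc b"] ff_prod[of i n] by simp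
    finally have e: "(\<Prod>t\<in>{Suc b..<d}. linf (\<alpha> t) (\<beta> t) (\<gamma> t) i j) = of_nat (ff (i + n) n)" .
    have p: "(\<Prod>t\<in>{b..<d}. linf (\<alpha> t) (\<beta> t) (\<gamma> t) i j) = linf (\<alpha> b) (\<beta> b) (\<gamma> b) i j * (\<Prod>t\<in>{Suc b..<d}. linf (\<alpha> t) (\<beta> t) (\<gamma> t) i j)"
      unfolding ins by simp
    show "(u * of_nat j + v) * of_nat (ff (i + n) n) = (\<Prod>t\<in>{b..<d}. linf (\<alpha> t) (\<beta> t) (\<gamma> t) i j)"
      unfolding p e by (simp add: \<alpha>_def \<beta>_def \<gamma>_def linf_def)
  qed
  define \<delta> where "\<delta> = om1 \<omega> - om2 \<omega>"
  have rZ: "(\<Prod>t\<in>{b..<d}. redf (of_nat d) (\<alpha> t) (\<beta> t) (\<gamma> t) i) = - u * Pr {1..a} i" for i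
  proof -
    have "(\<Prod>t\<in>{Suc b..<d}. redf (of_nat d) (\<alpha> t) (\<beta> t) (\<gamma> t) i) = (\<Prod>t\<in>{Suc b..<Suc b + n}. of_nat i + of_nat (Suc b + n - t))"
      unfolding dn(1)[symmetric] by (rule prod.cong) (auto simp: \<alpha>_def \<beta>_def \<gamma>_def redf_def dn(1)[symmetric] of_nat_diff)
    also have "\<dots> = Pr {1..n} i" using prod_shift_rev[of "of_nat i" n "Suc b"] by (simp add: Pr_def)
    finally have e: "(\<Prod>t\<in>{Suc b..<d}. redf (of_nat d) (\<alpha> t) (\<beta> t) (\<gamma> t) i) = Pr {1..n} i" .
    have h: "redf (of_nat d) (\<alpha> b) (\<beta> b) (\<gamma> b) i = - u * (of_nat i + of_nat a)"
    proof -
      have "of_nat d = (of_nat a + of_nat b :: complex)" by (metis abd of_nat_add)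
      thus ?thesis by (simp add: \<alpha>_def \<beta>_def \<gamma>_def redf_def u_def v_def algebra_simps)
    qed
    have p: "(\<Prod>t\<in>{b..<d}. redf (of_nat d) (\<alpha> t) (\<beta> t) (\<gamma> t) i) =
       redf (of_nat d) (\<alpha> b) (\<beta> b) (\<gamma> b) i * (\<Prod>t\<in>{Suc b..<d}. redf (of_nat d) (\<alpha> t) (\<beta> t) (\<gamma> t) i)"
      unfolding ins by simp
    show ?thesis unfolding p h e Pr_split4[OF a1, of i] n_def by (simp add: ac_simps)
  qed
  define wf where "wf = (\<lambda>(i::nat) (j::nat). (- (\<delta> ^ (d + 1))) / u * of_nat i * Pr {Suc a..d} i)"
  have wr: "realizable wf"
  proof -
    have "realizable (\<lambda>i j. (- (\<delta> ^ (d + 1)) / u) * linf 1 0 0 i j * Pr {Suc a..d} i)"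
      by (rule real_mult[OF real_mult[OF real_const real_lin] real_Pr])
    thus ?thesis by (rule real_cong) (simp add: wf_def linf_def)
  qed
  show ?thesis
  proof (rule combine[OF L_left_ideal E_in[OF hom] diag_Eop ZL hZ _ X _ wr])
    fix i j
    show "(\<Prod>t\<in>{0..d}. redf (of_nat d) (om1 \<omega>) (om2 \<omega>) (cR \<omega> d t) i) = wf i j * (\<Prod>t\<in>{b..<d}. redf (of_nat d) (\<alpha> t) (\<beta> t) (\<gamma> t) i)"
      unfolding prod_redX rZ Pr_split3[OF a1 dn(3)] using unz
      by (simp add: wf_def \<delta>_def field_simps)
  qed simp_all
qed

lemma caseB1b:
  assumes hom: "homogeneous_of_degree f d"
    and j0: "\<And>i j. (i,j) \<in> Poly_Mapping.keys f \<Longrightarrow> j = 0"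
    and X: "diag X (\<lambda>i j. \<Prod>t\<in>{0..d}. linf (om1 \<omega>) (om2 \<omega>) (cR \<omega> d t) i j)"
  shows "X \<in> Lset \<omega> f"
proof -
  define Dy :: weyl where "Dy = Poly_Mapping.single (0,0,0,1) 1"
  have DA: "Dy \<in> Ann_inv f" unfolding Dy_def by (rule Dy_Ann) (rule j0)
  have DI: "initial_form \<omega> Dy = Dy" unfolding Dy_def by (rule init_homog) simp
  have DL: "Dy \<in> Lset \<omega> f" using init_mem[OF DA, of \<omega>] DI by (simp add: Lset_def)
  define Z :: weyl where "Z = wmul (Poly_Mapping.single (0,1,0,0) 1) Dy"
  have ZL: "Z \<in> Lset \<omega> f" unfolding Z_def L_left_ideal by (rule lig_mul, fold L_left_ideal, rule DL)
  have hZ: "diag Z (\<lambda>i j. \<Prod>t\<in>{0::nat}. linf 0 1 0 i j)"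
    unfolding diag_def
  proof (intro allI)
    fix i j
    show "act Z (Poly_Mapping.single (i,j) 1) = Poly_Mapping.single (i,j) (\<Prod>t\<in>{0::nat}. linf 0 1 0 i j)"
      unfolding Z_def Dy_def act_wmul by (cases j) (simp_all add: act_single_single ffac_ff ff_def linf_def)
  qed
  define \<delta> where "\<delta> = om1 \<omega> - om2 \<omega>"
  define wf where "wf = (\<lambda>(i::nat) (j::nat). (- (\<delta> ^ (d + 1))) * Pr {0..<d} i)"
  have wr: "realizable wf"
  proof -
    have "realizable (\<lambda>i j. (- (\<delta> ^ (d + 1))) * Pr {0..<d} i)"
      by (rule real_mult[OF real_const real_Pr])
    thus ?thesis by (rule real_cong) (simp add: wf_def)
  qed
  show ?thesis
  proof (rule combine[OF L_left_ideal E_in[OF hom] diag_Eop ZL hZ _ X _ wr])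
    fix i j
    show "(\<Prod>t\<in>{0..d}. redf (of_nat d) (om1 \<omega>) (om2 \<omega>) (cR \<omega> d t) i) = wf i j * (\<Prod>t\<in>{0::nat}. redf (of_nat d) 0 1 0 i)"
      unfolding prod_redX Pr_split1[OF order_refl, of d i]
      by (simp add: wf_def \<delta>_def redf_def Pr_def algebra_simps)
  qed simp_all
qed

lemma caseB2b:
  assumes hom: "homogeneous_of_degree f d"
    and i0: "\<And>i j. (i,j) \<in> Poly_Mapping.keys f \<Longrightarrow> i = 0"
    and X: "diag X (\<lambda>i j. \<Prod>t\<in>{0..d}. linf (om1 \<omega>) (om2 \<omega>) (cR \<omega> d t) i j)"
  shows "X \<in> Lset \<omega> f"
proof -
  define Dx :: weyl where "Dx = Poly_Mapping.single (0,0,1,0) 1"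
  have DA: "Dx \<in> Ann_inv f" unfolding Dx_def by (rule Dx_Ann) (rule i0)
  have DI: "initial_form \<omega> Dx = Dx" unfolding Dx_def by (rule init_homog) simp
  have DL: "Dx \<in> Lset \<omega> f" using init_mem[OF DA, of \<omega>] DI by (simp add: Lset_def)
  define Z :: weyl where "Z = wmul (Poly_Mapping.single (1,0,0,0) 1) Dx"
  have ZL: "Z \<in> Lset \<omega> f" unfolding Z_def L_left_ideal by (rule lig_mul, fold L_left_ideal, rule DL)
  have hZ: "diag Z (\<lambda>i j. \<Prod>t\<in>{0::nat}. linf 1 0 0 i j)"
    unfolding diag_def
  proof (intro allI)
    fix i j
    show "act Z (Poly_Mapping.single (i,j) 1) = Poly_Mapping.single (i,j) (\<Prod>t\<in>{0::nat}. linf 1 0 0 i j)"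
      unfolding Z_def Dx_def act_wmul by (cases i) (simp_all add: act_single_single ffac_ff ff_def linf_def)
  qed
  define \<delta> where "\<delta> = om1 \<omega> - om2 \<omega>"
  define wf where "wf = (\<lambda>(i::nat) (j::nat). \<delta> ^ (d + 1) * Pr {1..d} i)"
  have wr: "realizable wf"
  proof -
    have "realizable (\<lambda>i j. (\<delta> ^ (d + 1)) * Pr {1..d} i)"
      by (rule real_mult[OF real_const real_Pr])
    thus ?thesis by (rule real_cong) (simp add: wf_def)
  qed
  have p0: "Pr {0..d} i = of_nat i * Pr {1..d} i" for i
  proof -
    have "{0..d} = insert 0 {1..d}" by auto
    thus ?thesis unfolding Pr_def by simp
  qed
  show ?thesis
  proof (rule combine[OF L_left_ideal E_in[OF hom] diag_Eop ZL hZ _ X _ wr])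
    fix i j
    show "(\<Prod>t\<in>{0..d}. redf (of_nat d) (om1 \<omega>) (om2 \<omega>) (cR \<omega> d t) i) = wf i j * (\<Prod>t\<in>{0::nat}. redf (of_nat d) 1 0 0 i)"
      unfolding prod_redX p0
      by (simp add: wf_def \<delta>_def redf_def)
  qed simp_all
qed



lemma R_in_L:
  assumes fnz: "f \<noteq> 0" and hom: "homogeneous_of_degree f d"
    and X: "diag X (\<lambda>i j. \<Prod>t\<in>{0..d}. linf (om1 \<omega>) (om2 \<omega>) (cR \<omega> d t) i j)"
    and ne: "fst \<omega> \<noteq> snd \<omega>"
  shows "X \<in> Lset \<omega> f"
proof -
  have kne: "Poly_Mapping.keys f \<noteq> {}" using fnz by simp
  show ?thesis
  proof (cases "fst \<omega> > snd \<omega>")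
    case w: True
    define a where "a = Min (fst ` Poly_Mapping.keys f)"
    have "a \<in> fst ` Poly_Mapping.keys f" unfolding a_def using kne by (intro Min_in) auto
    then obtain b where ab: "(a,b) \<in> Poly_Mapping.keys f" by force
    have amin: "a \<le> i" if "(i,j) \<in> Poly_Mapping.keys f" for i j
      unfolding a_def using that by (intro Min_le) force+
    have abd: "a + b = d" using hom_sum[OF hom ab] .
    show ?thesis
    proof (cases "1 \<le> b")
      case True show ?thesis by (rule caseB1a[OF hom ab _ True w X]) (rule amin)
    next
      case False
      hence "b = 0" by simp
      hence j0: "j = 0" if "(i,j) \<in> Poly_Mapping.keys f" for i j
        using amin[OF that] hom_sum[OF hom that] abd by simp
      show ?thesis by (rule caseB1b[OF hom _ X]) (rule j0)
    qed
  next
    case False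
    hence w: "fst \<omega> < snd \<omega>" using ne by simp
    define b where "b = Min (snd ` Poly_Mapping.keys f)"
    have "b \<in> snd ` Poly_Mapping.keys f" unfolding b_def using kne by (intro Min_in) auto
    then obtain a where ab: "(a,b) \<in> Poly_Mapping.keys f" by force
    have bmin: "b \<le> j" if "(i,j) \<in> Poly_Mapping.keys f" for i j
      unfolding b_def using that by (intro Min_le) force+
    have abd: "a + b = d" using hom_sum[OF hom ab] .
    show ?thesis
    proof (cases "1 \<le> a")
      case True show ?thesis by (rule caseB2a[OF hom ab _ True w X]) (rule bmin)
    next
      case False
      hence "a = 0" by simp
      hence i0: "i = 0" if "(i,j) \<in> Poly_Mapping.keys f" for i j
        using bmin[OF that] hom_sum[OF hom that] abd by simp
      show ?thesis by (rule caseB2b[OF hom _ X]) (rule i0)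
    qed
  qed
qed

theorem mainTheorem14:
  fixes f :: bipoly and d :: nat and \<omega> :: "real \<times> real"
  assumes "f \<noteq> 0" and "homogeneous_of_degree f d" and "\<omega> \<noteq> (0, 0)"
  shows "b_function (Ann_inv f) \<omega> dvd
    (\<Prod>c\<in>(\<lambda>i. complex_of_real (real i * fst \<omega> + real (d - i) * snd \<omega>)) ` {0..d}. [:c, 1:])"
proof -
  define C where "C = (\<lambda>i. complex_of_real (real i * fst \<omega> + real (d - i) * snd \<omega>)) ` {0..d}"
  define R where "R = (\<Prod>c\<in>C. [:c, 1:])"
  have finC: "finite C" by (simp add: C_def)
  have Rnz: "R \<noteq> 0" unfolding R_def using finC by (simp add: prod_zero_iff)
  have dR: "diag (poly_in_s \<omega> R) (\<lambda>i j. \<Prod>c\<in>C. om1 \<omega> * of_nat i + om2 \<omega> * of_nat j + c)"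
    by (rule diag_cong[OF diag_poly_in_s]) (simp add: R_def poly_prod algebra_simps)
  have "poly_in_s \<omega> R \<in> Lset \<omega> f"
  proof (cases "fst \<omega> = snd \<omega>")
    case True
    define w where "w = fst \<omega>"
    have C1: "C = {complex_of_real (real d * w)}"
    proof -
      have "complex_of_real (real i * fst \<omega> + real (d - i) * snd \<omega>) = complex_of_real (real d * w)" if "i \<in> {0..d}" for i
        using that True by (simp add: w_def of_nat_diff algebra_simps)
      thus ?thesis unfolding C_def by auto
    qed
    have "diag (wmul (sc (complex_of_real w)) (Eop d)) (\<lambda>i j. complex_of_real w * (of_nat i + of_nat j + of_nat d))"
      by (rule diag_wmul[OF diag_sc diag_Eop])
    hence "diag (wmul (sc (complex_of_real w)) (Eop d)) (\<lambda>i j. \<Prod>c\<in>C. om1 \<omega> * of_nat i + om2 \<omega> * of_nat j + c)"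
      by (rule diag_cong) (simp add: C1 om1_def om2_def True w_def algebra_simps)
    hence "poly_in_s \<omega> R = wmul (sc (complex_of_real w)) (Eop d)" using dR diag_unique by blast
    moreover have "wmul (sc (complex_of_real w)) (Eop d) \<in> Lset \<omega> f"
      unfolding L_left_ideal by (rule lig_mul, fold L_left_ideal, rule E_in[OF assms(2)])
    ultimately show ?thesis by simp
  next
    case False
    have inj: "inj_on (cR \<omega> d) {0..d}"
    proof (rule inj_onI)
      fix s t assume s: "s \<in> {0..d}" and t: "t \<in> {0..d}" and e: "cR \<omega> d s = cR \<omega> d t"
      hence "real s * fst \<omega> + real (d - s) * snd \<omega> = real t * fst \<omega> + real (d - t) * snd \<omega>"
        by (simp only: cR_def of_real_eq_iff)
      hence "(real s - real t) * (fst \<omega> - snd \<omega>) = 0" using s t by (simp add: of_nat_diff algebra_simps)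
      thus "s = t" using False by simp
    qed
    have CI: "C = cR \<omega> d ` {0..d}" unfolding C_def cR_def ..
    have "diag (poly_in_s \<omega> R) (\<lambda>i j. \<Prod>t\<in>{0..d}. linf (om1 \<omega>) (om2 \<omega>) (cR \<omega> d t) i j)"
      by (rule diag_cong[OF dR]) (simp add: CI prod.reindex[OF inj] linf_def)
    thus ?thesis by (rule R_in_L[OF assms(1,2) _ False])
  qed
  hence "R \<in> Jset \<omega> (Ann_inv f)" by (simp add: Jset_def Lset_def)
  thus ?thesis using b_function_dvd[OF _ Rnz] by (simp add: R_def C_def)
qed


end
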